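(* Let $s\ge2$, $\alpha>0$, and for integers $i\ge2$ let $I_i=[i,i+\alpha\log i]$. Then, as $i\to\infty$, $$\prod_{\omega\in\Omega_{I_i}}P(E_\omega^c)=i^{-\alpha\lambda_s+o(1)},\qquad \lambda_s=\frac{\Gamma^s(1/s)}{s!\,s^s}.$$
   Context: Let $A\subseteq\{1,2,\dots\}$ be a random set in which the events $\{n\in A\}$ are mutually independent with $P(n\in A)=\frac1s n^{-1+1/s}$. For a finite set $\omega$ of distinct positive integers, $E_\omega$ is the event $\{\omega\subseteq A\}$ and $E_\omega^c$ its complement $\{\omega\not\subseteq A\}$. For $\omega=\{x_1,\dots,x_r\}$ define $\sigma(\omega)=\{a_1x_1+\cdots+a_rx_r: a_1+\cdots+a_r=s,\ a_i\ge1 \text{ integers}\}$. For an interval $I$, $\Omega_I=\{\omega:\sigma(\omega)\cap I\neq\emptyset\}$. $\Gamma$ is Euler's Gamma function. *)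

theory Defs
  imports "HOL-Probability.Probability"
begin

definition incl_prob :: "nat \<Rightarrow> nat \<Rightarrow> real" where
  "incl_prob s n = (1 / real s) * real n powr (-1 + 1 / real s)"

text \<open>The random set A, encoded by its indicator f :: nat => bool (A = {n. f n}),
  with mutually independent coordinates: the product measure of Bernoulli laws.\<close>
definition rand_set_space :: "nat \<Rightarrow> (nat \<Rightarrow> bool) measure" where
  "rand_set_space s = (\<Pi>\<^sub>M n\<in>UNIV. measure_pmf (bernoulli_pmf (incl_prob s n)))"

definition prob_Ec :: "nat \<Rightarrow> nat set \<Rightarrow> real" where
  "prob_Ec s \<omega> = measure (rand_set_space s)
      {f \<in> space (rand_set_space s). \<not> (\<omega> \<subseteq> {n. f n})}"

definition sigma_set :: "nat \<Rightarrow> nat set \<Rightarrow> nat set" where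
  "sigma_set s \<omega> = {(\<Sum>x\<in>\<omega>. a x * x) | a. (\<forall>x\<in>\<omega>. a x \<ge> 1) \<and> (\<Sum>x\<in>\<omega>. a x) = s}"

definition Omega_set :: "nat \<Rightarrow> real set \<Rightarrow> nat set set" where
  "Omega_set s I = {\<omega>. finite \<omega> \<and> \<omega> \<subseteq> {1..} \<and> (real ` sigma_set s \<omega>) \<inter> I \<noteq> {}}"

definition lambda_s :: "nat \<Rightarrow> real" where
  "lambda_s s = Gamma (1 / real s) ^ s / (fact s * real s ^ s)"

end

theory Submission
  imports Defs "HOL-Computational_Algebra.Formal_Power_Series" "HOL-Combinatorics.Multiset_Permutations" "HOL-Real_Asymp.Real_Asymp"
begin

fun H :: "(nat \<Rightarrow> real) \<Rightarrow> nat list \<Rightarrow> nat \<Rightarrow> real" where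
  "H f [] m = (if m = 0 then 1 else 0)"
| "H f (a # as) m = (\<Sum>x\<le>m. if a*x \<le> m then f x * H f as (m - a*x) else 0)"

definition WT :: "nat list \<Rightarrow> nat \<Rightarrow> nat list set" where
  "WT as m = {xs. length xs = length as \<and> sum_list (map2 (*) as xs) = m}"

lemma WT_bound: "0 \<notin> set (as::nat list) \<Longrightarrow> length xs = length as \<Longrightarrow> y \<in> set xs \<Longrightarrow> y \<le> sum_list (map2 (*) as xs)"
proof (induction as arbitrary: xs)
  case Nil then show ?case by simp
next
  case (Cons a as)
  then obtain x xs' where xs: "xs = x # xs'" by (cases xs) auto
  have "a \<noteq> 0" using Cons.prems(1) by auto
  then obtain a' where "a = Suc a'" by (cases a) auto
  then have "x \<le> a * x" by simp
  have "y \<le> sum_list (map2 (*) as xs')" if "y \<in> set xs'" using Cons.IH Cons.prems xs that by auto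
  then show ?case using Cons.prems xs \<open>x \<le> a * x\<close> by (auto simp: trans_le_add1 trans_le_add2)
qed

lemma WT_finite: "0 \<notin> set as \<Longrightarrow> finite (WT as m)"
proof -
  assume "0 \<notin> set as"
  then have "WT as m \<subseteq> {xs. set xs \<subseteq> {..m} \<and> length xs = length as}" using WT_bound by (fastforce simp: WT_def)
  moreover have "finite {xs. set xs \<subseteq> {..m} \<and> length xs = length as}"
    by (rule finite_lists_length_eq) simp
  ultimately show ?thesis by (rule finite_subset)
qed

lemma WT_Nil: "WT [] m = (if m = 0 then {[]} else {})"
  by (auto simp: WT_def)

lemma WT_Cons: "0 < a \<Longrightarrow> WT (a # as) m = (\<lambda>(x,xs). x # xs) ` (SIGMA x:{x\<in>{..m}. a*x \<le> m}. WT as (m - a*x))"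
proof (intro equalityI subsetI)
  assume a: "0 < a"
  fix ys assume "ys \<in> WT (a # as) m"
  then obtain x xs where ys: "ys = x # xs" and "length xs = length as"
      "a*x + sum_list (map2 (*) as xs) = m"
    by (cases ys) (auto simp: WT_def)
  then show "ys \<in> (\<lambda>(x,xs). x # xs) ` (SIGMA x:{x\<in>{..m}. a*x \<le> m}. WT as (m - a*x))"
    using a by (auto simp: WT_def image_iff intro: order.trans[of x "a*x"])
next
  fix ys assume "ys \<in> (\<lambda>(x,xs). x # xs) ` (SIGMA x:{x\<in>{..m}. a*x \<le> m}. WT as (m - a*x))"
  then obtain x xs where "ys = x # xs" "a*x \<le> m" "xs \<in> WT as (m - a*x)" by auto
  then show "ys \<in> WT (a # as) m" by (auto simp: WT_def)
qed

lemma H_WT: "0 \<notin> set as \<Longrightarrow> (\<Sum>xs\<in>WT as m. prod_list (map f xs)) = H f as m"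
proof (induction as arbitrary: m)
  case Nil
  then show ?case by (simp add: WT_Nil)
next
  case (Cons a as)
  have inj: "inj_on (\<lambda>(x,xs). x # xs) (SIGMA x:{x\<in>{..m}. a*x \<le> m}. WT as (m - a*x))"
    by (auto simp: inj_on_def)
  have "(\<Sum>xs\<in>WT (a#as) m. prod_list (map f xs))
      = (\<Sum>(x,xs)\<in>(SIGMA x:{x\<in>{..m}. a*x \<le> m}. WT as (m - a*x)). f x * prod_list (map f xs))"
  proof -
    have a: "0 < a" using Cons.prems by (cases a) auto
    show ?thesis unfolding WT_Cons[OF a] sum.reindex[OF inj] by (simp add: case_prod_unfold)
  qed
  also have "\<dots> = (\<Sum>x\<in>{x\<in>{..m}. a*x \<le> m}. \<Sum>xs\<in>WT as (m - a*x). f x * prod_list (map f xs))"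
    by (rule sum.Sigma[symmetric]) (use Cons.prems in \<open>auto simp: WT_finite\<close>)
  also have "\<dots> = (\<Sum>x\<in>{x\<in>{..m}. a*x \<le> m}. f x * H f as (m - a*x))"
    using Cons by (simp add: sum_distrib_left[symmetric])
  also have "\<dots> = H f (a#as) m"
    by (subst sum.inter_filter) simp_all
  finally show ?case .
qed

definition Phi :: "(nat \<Rightarrow> real) \<Rightarrow> nat \<Rightarrow> nat \<Rightarrow> real" where
  "Phi f k m = H f (replicate k 1) m"

lemma Phi_0: "Phi f 0 m = (if m = 0 then 1 else 0)"
  by (simp add: Phi_def)

lemma Phi_Suc: "Phi f (Suc k) m = (\<Sum>x\<le>m. f x * Phi f k (m - x))"
  by (simp add: Phi_def)

lemma Phi_nonneg: "(\<And>x. 0 \<le> f x) \<Longrightarrow> 0 \<le> Phi f k m"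
  by (induction k arbitrary: m) (auto simp: Phi_0 Phi_Suc intro!: sum_nonneg mult_nonneg_nonneg)

lemma Phi_mono: "(\<And>x. 0 \<le> f x) \<Longrightarrow> (\<And>x. f x \<le> g x) \<Longrightarrow> Phi f k m \<le> Phi g k m"
proof (induction k arbitrary: m)
  case 0 then show ?case by (simp add: Phi_0)
next
  case (Suc k)
  show ?case unfolding Phi_Suc
  proof (rule sum_mono)
    fix x
    show "f x * Phi f k (m - x) \<le> g x * Phi g k (m - x)"
      using Suc Phi_nonneg[of f k "m-x"] by (intro mult_mono) (auto intro: order.trans)
  qed
qed

lemma Phi_scale: "Phi (\<lambda>x. R * f x) k m = R ^ k * Phi f k m"
  by (induction k arbitrary: m) (auto simp: Phi_0 Phi_Suc sum_distrib_left mult_ac)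

fun Bad :: "(nat \<Rightarrow> real) \<Rightarrow> nat \<Rightarrow> nat \<Rightarrow> nat \<Rightarrow> real" where
  "Bad c M 0 m = 0"
| "Bad c M (Suc k) m = (\<Sum>x\<le>m. c x * (if x \<le> M then Phi c k (m-x) else Bad c M k (m-x)))"

lemma Bad_nonneg: "(\<And>x. 0 \<le> c x) \<Longrightarrow> 0 \<le> Bad c M k m"
  by (induction k arbitrary: m) (auto intro!: sum_nonneg mult_nonneg_nonneg Phi_nonneg)

lemma sum_swap_bound:
  "(\<Sum>x\<le>(m::nat). if x \<le> (M::nat) then g x else 0) = (\<Sum>y\<le>M. if y \<le> m then g y else (0::real))"
proof -
  have "(\<Sum>x\<le>m. if x \<le> M then g x else 0) = sum g {x\<in>{..m}. x \<le> M}"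
    by (subst sum.inter_filter) auto
  also have "{x\<in>{..m}. x \<le> M} = {y\<in>{..M}. y \<le> m}" by auto
  also have "sum g \<dots> = (\<Sum>y\<le>M. if y \<le> m then g y else 0)"
    by (subst sum.inter_filter) auto
  finally show ?thesis .
qed

lemma Bad_bound:
  assumes c0: "\<And>x. 0 \<le> c x"
  shows "Bad c M (Suc k) m \<le> real (Suc k) * (\<Sum>y\<le>M. if y \<le> m then c y * Phi c k (m - y) else 0)"
proof (induction k arbitrary: m)
  case 0
  have "Bad c M (Suc 0) m = (\<Sum>x\<le>m. if x \<le> M then c x * Phi c 0 (m-x) else 0)"
    by (auto intro!: sum.cong)
  also have "\<dots> = (\<Sum>y\<le>M. if y \<le> m then c y * Phi c 0 (m - y) else 0)"
    by (rule sum_swap_bound)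
  finally show ?case by simp
next
  case (Suc k)
  let ?S = "\<lambda>k m. (\<Sum>y\<le>M. if y \<le> m then c y * Phi c k (m - y) else 0)"
  have "Bad c M (Suc (Suc k)) m \<le> (\<Sum>x\<le>m. (if x \<le> M then c x * Phi c (Suc k) (m-x) else 0)
        + c x * Bad c M (Suc k) (m-x))"
    unfolding Bad.simps(2)[of c M "Suc k"]
    using c0 Bad_nonneg[of c, OF c0] Phi_nonneg[of c, OF c0]
    by (intro sum_mono) (auto simp: mult_nonneg_nonneg simp del: Bad.simps)
  also have "\<dots> = ?S (Suc k) m + (\<Sum>x\<le>m. c x * Bad c M (Suc k) (m-x))"
    by (simp add: sum.distrib sum_swap_bound)
  also have "(\<Sum>x\<le>m. c x * Bad c M (Suc k) (m-x)) \<le> (\<Sum>x\<le>m. c x * (real (Suc k) * ?S k (m-x)))"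
    using Suc c0 by (intro sum_mono mult_left_mono) auto
  also have "\<dots> = real (Suc k) * (\<Sum>x\<le>m. \<Sum>y\<le>M. if y \<le> m - x then c y * (c x * Phi c k (m - x - y)) else 0)"
    by (simp add: sum_distrib_left sum_distrib_right mult_ac if_distrib cong: if_cong)
  also have "\<dots> = real (Suc k) * (\<Sum>y\<le>M. \<Sum>x\<le>m. if y \<le> m - x then c y * (c x * Phi c k (m - x - y)) else 0)"
    by (subst sum.swap) (rule refl)
  also have "(\<Sum>y\<le>M. \<Sum>x\<le>m. if y \<le> m - x then c y * (c x * Phi c k (m - x - y)) else 0)
      = ?S (Suc k) m"
  proof (rule sum.cong[OF refl])
    fix y assume "y \<in> {..M}"
    show "(\<Sum>x\<le>m. if y \<le> m - x then c y * (c x * Phi c k (m - x - y)) else 0)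
        = (if y \<le> m then c y * Phi c (Suc k) (m - y) else 0)"
    proof (cases "y \<le> m")
      case True
      have "(\<Sum>x\<le>m. if y \<le> m - x then c y * (c x * Phi c k (m - x - y)) else 0)
          = (\<Sum>x\<le>m. if x \<le> m - y then c y * (c x * Phi c k (m - y - x)) else 0)"
        using True by (intro sum.cong) (auto simp: diff_commute add.commute)
      also have "\<dots> = (\<Sum>x\<in>{x\<in>{..m}. x \<le> m - y}. c y * (c x * Phi c k (m - y - x)))"
        by (subst sum.inter_filter) auto
      also have "{x\<in>{..m}. x \<le> m - y} = {..m-y}" by auto
      also have "(\<Sum>x\<le>m-y. c y * (c x * Phi c k (m - y - x))) = c y * Phi c (Suc k) (m - y)"
        by (simp add: Phi_Suc sum_distrib_left)
      finally show ?thesis using True by simp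
    next
      case False
      then show ?thesis by (intro trans[OF sum.neutral]) auto
    qed
  qed
  finally show ?case by (simp add: algebra_simps)
qed

lemma Phi_le_R:
  assumes u0: "\<And>x. 0 \<le> u x" and uR: "\<And>x. u x \<le> R * c x"
  shows "Phi u k m \<le> R ^ k * Phi c k m"
  using Phi_mono[of u "\<lambda>x. R * c x" k m] u0 uR by (simp add: Phi_scale)

lemma Phi_compare:
  assumes c0: "\<And>x. 0 \<le> c x" and u0: "\<And>x. 0 \<le> u x" and uR: "\<And>x. u x \<le> R * c x"
    and up: "\<And>x. x > M \<Longrightarrow> u x \<le> (1+\<delta>) * c x" and lo: "\<And>x. x > M \<Longrightarrow> (1-\<delta>) * c x \<le> u x"
    and d: "0 \<le> \<delta>" "\<delta> \<le> 1" "1 + \<delta> \<le> R"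
  shows "Phi u k m \<le> (1+\<delta>)^k * Phi c k m + R^k * Bad c M k m \<and>
         (1-\<delta>)^k * (Phi c k m - Bad c M k m) \<le> Phi u k m"
proof (induction k arbitrary: m)
  case 0
  then show ?case by (simp add: Phi_0)
next
  case (Suc k)
  have R0: "0 \<le> R" using d by simp
  have Pc: "\<And>j. 0 \<le> Phi c k j" using Phi_nonneg[of c] c0 by blast
  have Pu: "\<And>j. 0 \<le> Phi u k j" using Phi_nonneg[of u] u0 by blast
  have Bc: "\<And>j. 0 \<le> Bad c M k j" using Bad_nonneg[of c] c0 by blast
  have t1: "u x * Phi u k (m-x) \<le> (1+\<delta>)^(Suc k) * (c x * Phi c k (m-x))
      + R^(Suc k) * (c x * (if x \<le> M then Phi c k (m-x) else Bad c M k (m-x)))" for x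
  proof (cases "x \<le> M")
    case True
    have "u x * Phi u k (m-x) \<le> (R * c x) * (R^k * Phi c k (m-x))"
      using Phi_le_R[of u R c k "m-x"] u0 uR Pu by (intro mult_mono) (auto intro: order.trans[OF u0 uR])
    moreover have "0 \<le> (1+\<delta>)^(Suc k) * (c x * Phi c k (m-x))"
      using d c0 Pc by (intro mult_nonneg_nonneg) auto
    ultimately show ?thesis using True by (simp add: mult_ac)
  next
    case False
    have "u x * Phi u k (m-x) \<le> ((1+\<delta>) * c x) * ((1+\<delta>)^k * Phi c k (m-x) + R^k * Bad c M k (m-x))"
      using Suc.IH[of "m-x"] u0 up[of x] False Pu d c0 by (intro mult_mono) auto
    also have "\<dots> = (1+\<delta>)^(Suc k) * (c x * Phi c k (m-x)) + (1+\<delta>) * (R^k * (c x * Bad c M k (m-x)))"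
      by (simp add: algebra_simps)
    also have "(1+\<delta>) * (R^k * (c x * Bad c M k (m-x))) \<le> R * (R^k * (c x * Bad c M k (m-x)))"
      using d R0 c0 Bc by (intro mult_right_mono mult_nonneg_nonneg) auto
    finally show ?thesis using False by (simp add: mult_ac)
  qed
  have t2: "(1-\<delta>)^(Suc k) * (c x * Phi c k (m-x)
      - c x * (if x \<le> M then Phi c k (m-x) else Bad c M k (m-x))) \<le> u x * Phi u k (m-x)" for x
  proof (cases "x \<le> M")
    case True
    then show ?thesis using u0 Pu by simp
  next
    case False
    have "(1-\<delta>)^(Suc k) * (c x * Phi c k (m-x) - c x * Bad c M k (m-x))
        = ((1-\<delta>) * c x) * ((1-\<delta>)^k * (Phi c k (m-x) - Bad c M k (m-x)))"
      by (simp add: algebra_simps)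
    also have "\<dots> \<le> ((1-\<delta>) * c x) * Phi u k (m-x)"
      using Suc.IH[of "m-x"] d c0 by (intro mult_left_mono) auto
    also have "\<dots> \<le> u x * Phi u k (m-x)"
      using lo[of x] False Pu by (intro mult_right_mono) auto
    finally show ?thesis using False by simp
  qed
  have "Phi u (Suc k) m \<le> (\<Sum>x\<le>m. (1+\<delta>)^(Suc k) * (c x * Phi c k (m-x))
      + R^(Suc k) * (c x * (if x \<le> M then Phi c k (m-x) else Bad c M k (m-x))))"
    unfolding Phi_Suc by (intro sum_mono t1)
  also have "\<dots> = (1+\<delta>)^(Suc k) * Phi c (Suc k) m + R^(Suc k) * Bad c M (Suc k) m"
    by (simp add: sum.distrib sum_distrib_left Phi_Suc)
  finally have U: "Phi u (Suc k) m \<le> (1+\<delta>)^(Suc k) * Phi c (Suc k) m + R^(Suc k) * Bad c M (Suc k) m" .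
  have "(1-\<delta>)^(Suc k) * (Phi c (Suc k) m - Bad c M (Suc k) m)
      = (\<Sum>x\<le>m. (1-\<delta>)^(Suc k) * (c x * Phi c k (m-x)
      - c x * (if x \<le> M then Phi c k (m-x) else Bad c M k (m-x))))"
    by (simp add: sum_subtractf sum_distrib_left Phi_Suc right_diff_distrib)
  also have "\<dots> \<le> Phi u (Suc k) m"
    unfolding Phi_Suc[of u] by (intro sum_mono t2)
  finally show ?case using U by simp
qed

lemma pow_le_3: "0 \<le> (\<delta>::real) \<Longrightarrow> \<delta> \<le> 1 \<Longrightarrow> (1+\<delta>)^K \<le> 1 + 3^K * \<delta>"
proof (induction K)
  case 0 then show ?case by simp
next
  case (Suc K)
  have "(1+\<delta>)^Suc K = (1+\<delta>) * (1+\<delta>)^K" by simp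
  also have "\<dots> \<le> (1+\<delta>) * (1 + 3^K * \<delta>)" using Suc by (intro mult_left_mono) auto
  also have "\<dots> \<le> 1 + 3^Suc K * \<delta>"
  proof -
    have a: "3^K*\<delta>*\<delta> \<le> 3^K*\<delta>" using Suc.prems by (simp add: mult_left_le)
    have b: "\<delta> \<le> 3^K*\<delta>" using Suc.prems by (simp add: mult_le_cancel_right1)
    have "(1+\<delta>) * (1 + 3^K * \<delta>) = 1 + \<delta> + 3^K*\<delta> + 3^K*\<delta>*\<delta>" by (simp add: algebra_simps)
    then show ?thesis using a b by (simp only: power_Suc)
  qed
  finally show ?case .
qed

lemma pow_ge_3: "0 \<le> (\<delta>::real) \<Longrightarrow> \<delta> \<le> 1 \<Longrightarrow> 1 - 3^K * \<delta> \<le> (1-\<delta>)^K"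
proof -
  assume d: "0 \<le> \<delta>" "\<delta> \<le> 1"
  have "1 + real K * (-\<delta>) \<le> (1 + -\<delta>)^K" using d by (intro Bernoulli_inequality) auto
  moreover have "real K \<le> 3^K"
  proof -
    have "K < 3^K" by (induction K) auto
    then have "real K < real (3^K)" by linarith
    then show ?thesis by simp
  qed
  then have "real K * \<delta> \<le> 3^K * \<delta>" using d by (intro mult_right_mono) auto
  ultimately show ?thesis by simp
qed

lemma Phi_limit:
  assumes c0: "\<And>x. 0 \<le> c x" and u0: "\<And>x. 0 \<le> u x" and uR: "\<And>x. u x \<le> R * c x"
    and conv: "\<And>\<delta>. \<delta> > 0 \<Longrightarrow> \<exists>M. \<forall>x>M. \<bar>u x - c x\<bar> \<le> \<delta> * c x"
    and one: "\<And>m. Phi c (Suc k) m = 1"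
    and zero: "(\<lambda>m. Phi c k m) \<longlonglongrightarrow> 0"
  shows "(\<lambda>m. Phi u (Suc k) m) \<longlonglongrightarrow> 1"
proof (rule LIMSEQ_I)
  fix r :: real assume r: "r > 0"
  define K where "K = Suc k"
  define \<delta> where "\<delta> = min 1 (r / (2 * 3^K))"
  define R' where "R' = max R 2"
  have d: "0 < \<delta>" "\<delta> \<le> 1" "3^K * \<delta> \<le> r/2" using r
    by (auto simp: \<delta>_def field_simps min_def)
  have R': "1 + \<delta> \<le> R'" "1 \<le> R'" using d by (auto simp: R'_def)
  have uR': "u x \<le> R' * c x" for x
    using uR[of x] c0[of x] by (smt (verit) R'_def mult_right_mono max.cobounded1)
  obtain M where M: "\<And>x. x > M \<Longrightarrow> \<bar>u x - c x\<bar> \<le> \<delta> * c x" using conv[OF d(1)] by blast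
  have up: "u x \<le> (1+\<delta>) * c x" and lo: "(1-\<delta>) * c x \<le> u x" if "x > M" for x
    using M[OF that] by (auto simp: algebra_simps abs_le_iff)
  have cmp: "Phi u K m \<le> (1+\<delta>)^K * Phi c K m + R'^K * Bad c M K m \<and>
         (1-\<delta>)^K * (Phi c K m - Bad c M K m) \<le> Phi u K m" for m
    by (rule Phi_compare[OF c0 u0 uR' up lo]) (use d R' in auto)
  have termlim: "(\<lambda>m. if y \<le> m then c y * Phi c k (m - y) else 0) \<longlonglongrightarrow> 0" for y
  proof -
    have "(\<lambda>m. c y * Phi c k (m - y)) \<longlonglongrightarrow> c y * 0"
      by (intro tendsto_mult tendsto_const filterlim_compose[OF zero filterlim_minus_const_nat_at_top])
    moreover have "eventually (\<lambda>m. c y * Phi c k (m - y) = (if y \<le> m then c y * Phi c k (m - y) else 0)) sequentially"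
      using eventually_ge_at_top[of y] by eventually_elim auto
    ultimately show ?thesis by (simp add: tendsto_cong)
  qed
  have T: "(\<lambda>m. R'^K * (real K * (\<Sum>y\<le>M. if y \<le> m then c y * Phi c k (m - y) else 0))) \<longlonglongrightarrow> R'^K * (real K * 0)"
    by (intro tendsto_mult tendsto_const) (use tendsto_sum[of "{..M}", OF termlim] in simp)
  then obtain N where N: "\<And>m. m \<ge> N \<Longrightarrow> R'^K * (real K * (\<Sum>y\<le>M. if y \<le> m then c y * Phi c k (m - y) else 0)) < r/2"
  proof -
    assume *: "\<And>N. (\<And>m. m \<ge> N \<Longrightarrow> R'^K * (real K * (\<Sum>y\<le>M. if y \<le> m then c y * Phi c k (m - y) else 0)) < r/2) \<Longrightarrow> thesis"
    from T have "\<exists>N. \<forall>m\<ge>N. norm (R'^K * (real K * (\<Sum>y\<le>M. if y \<le> m then c y * Phi c k (m - y) else 0)) - 0) < r/2"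
      unfolding mult_zero_right by (rule LIMSEQ_D) (use r in simp)
    then show thesis using * by force
  qed
  show "\<exists>no. \<forall>n\<ge>no. norm (Phi u (Suc k) n - 1) < r"
  proof (intro exI allI impI)
    fix m assume m: "m \<ge> N"
    have B0: "0 \<le> Bad c M K m" using Bad_nonneg[of c] c0 by blast
    have "Bad c M K m \<le> real K * (\<Sum>y\<le>M. if y \<le> m then c y * Phi c k (m - y) else 0)"
      unfolding K_def by (rule Bad_bound[OF c0])
    then have "R'^K * Bad c M K m \<le> R'^K * (real K * (\<Sum>y\<le>M. if y \<le> m then c y * Phi c k (m - y) else 0))"
      using R' by (intro mult_left_mono) auto
    with N[OF m] have B: "R'^K * Bad c M K m < r/2" by linarith
    have "Bad c M K m \<le> R'^K * Bad c M K m" using R' B0 by (simp add: mult_le_cancel_right1 one_le_power)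
    with B have B2: "Bad c M K m < r/2" by linarith
    have P1: "Phi c K m = 1" unfolding K_def by (rule one)
    have "(1-\<delta>)^K \<le> 1" using d by (intro power_le_one) auto
    then have "(1-\<delta>)^K * Bad c M K m \<le> 1 * Bad c M K m" using B0 by (intro mult_right_mono) auto
    moreover have "(1-\<delta>)^K \<ge> 1 - r/2" using pow_ge_3[of \<delta> K] d by linarith
    moreover have "(1+\<delta>)^K \<le> 1 + r/2" using pow_le_3[of \<delta> K] d by linarith
    ultimately show "norm (Phi u (Suc k) m - 1) < r"
      using cmp[of m] B B2 P1 unfolding K_def[symmetric] by (auto simp: algebra_simps abs_less_iff)
  qed
qed

definition cc :: "real \<Rightarrow> nat \<Rightarrow> real" where
  "cc g n = pochhammer g n / fact n"

lemma cc_nonneg: "0 \<le> g \<Longrightarrow> 0 \<le> cc g n"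
  unfolding cc_def
  by (cases "g = 0") (auto simp: pochhammer_0_left intro!: divide_nonneg_pos pochhammer_nonneg)

lemma cc_pos: "0 < g \<Longrightarrow> 0 < cc g n"
  unfolding cc_def by (auto intro!: divide_pos_pos pochhammer_pos)

lemma cc_gchoose: "cc g n = (-1)^n * ((-g) gchoose n)"
  unfolding cc_def gbinomial_pochhammer by simp

lemma cc_vandermonde: "(\<Sum>x\<le>m. cc a x * cc b (m - x)) = cc (a + b) m"
proof -
  have "(\<Sum>x\<le>m. cc a x * cc b (m - x)) = (\<Sum>x\<in>{0..m}. (-1)^m * (((-a) gchoose x) * ((-b) gchoose (m - x))))"
  proof (rule sum.cong)
    show "{..m} = {0..m}" by auto
  next
    fix x assume "x \<in> {0..m}"
    then have "(-1::real)^x * (-1)^(m-x) = (-1)^m" by (simp flip: power_add)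
    then show "cc a x * cc b (m - x) = (-1)^m * (((-a) gchoose x) * ((-b) gchoose (m - x)))"
      unfolding cc_gchoose by (metis (no_types, lifting) mult.assoc mult.left_commute)
  qed
  also have "\<dots> = (-1)^m * ((-a + -b) gchoose m)"
    by (simp add: sum_distrib_left[symmetric] gbinomial_Vandermonde)
  also have "\<dots> = cc (a + b) m" by (simp add: cc_gchoose)
  finally show ?thesis .
qed

lemma Phi_cc: "Phi (cc g) k m = cc (real k * g) m"
proof (induction k arbitrary: m)
  case 0
  then show ?case by (simp add: Phi_0 cc_def pochhammer_0_left)
next
  case (Suc k)
  then show ?case by (simp add: Phi_Suc cc_vandermonde algebra_simps)
qed

lemma cc_one: "cc 1 m = 1"
  by (simp add: cc_def pochhammer_fact[symmetric])

lemma aux_div: "(X::real) \<noteq> 0 \<Longrightarrow> p \<noteq> 0 \<Longrightarrow> X / (A * X / p * N) = p / (A * N)"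
  by (simp add: field_simps)

lemma cc_Suc_GS:
  assumes g: "0 < g" and n: "0 < n"
  shows "cc g (Suc n) = real n powr g / (Gamma_series g n * real (Suc n))"
proof -
  have p: "pochhammer g (n+1) > 0" using g by (intro pochhammer_pos)
  have GS: "Gamma_series g n = fact n * real n powr g / pochhammer g (n+1)"
    using n by (simp add: Gamma_series_def powr_def)
  have "Gamma_series g n > 0" unfolding GS using p n by (intro divide_pos_pos) auto
  moreover have P: "real n powr g > 0" using n by simp
  ultimately show ?thesis unfolding cc_def GS using p n
  proof -
    have "real n powr g / (fact n * real n powr g / pochhammer g (n + 1) * real (Suc n))
        = pochhammer g (n+1) / (fact n * real (Suc n))"
      using P p aux_div[of "real n powr g" "pochhammer g (n+1)" "fact n" "real (Suc n)"] by simp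
    also have "\<dots> = pochhammer g (Suc n) / fact (Suc n)" by (simp add: mult.commute)
    finally show "pochhammer g (Suc n) / fact (Suc n) = real n powr g / (fact n * real n powr g / pochhammer g (n + 1) * real (Suc n))" by simp
  qed
qed

lemma cc_lim0:
  assumes "0 < g" "g < 1"
  shows "cc g \<longlonglongrightarrow> 0"
proof -
  have G: "Gamma g > 0" using assms by simp
  have A: "(\<lambda>n. real n powr g / real (Suc n)) \<longlonglongrightarrow> 0" using assms by real_asymp
  have "(\<lambda>n. (real n powr g / real (Suc n)) * inverse (Gamma_series g n)) \<longlonglongrightarrow> 0 * inverse (Gamma g)"
    by (intro tendsto_mult A tendsto_inverse Gamma_series_LIMSEQ) (use G in auto)
  moreover have "eventually (\<lambda>n. (real n powr g / real (Suc n)) * inverse (Gamma_series g n) = cc g (Suc n)) sequentially"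
    using eventually_gt_at_top[of 0] by eventually_elim (use assms in \<open>simp add: cc_Suc_GS field_simps\<close>)
  ultimately have "(\<lambda>n. cc g (Suc n)) \<longlonglongrightarrow> 0" by (simp add: tendsto_cong)
  then show ?thesis by (rule LIMSEQ_imp_Suc)
qed

definition w0 :: "nat \<Rightarrow> nat \<Rightarrow> real" where
  "w0 s x = (if x = 0 then 0 else real x powr (1 / real s - 1))"

definition uu :: "nat \<Rightarrow> nat \<Rightarrow> real" where
  "uu s x = w0 s x / Gamma (1 / real s)"

lemma w0_nonneg: "0 \<le> w0 s x" by (simp add: w0_def)

lemma uu_nonneg: "0 < s \<Longrightarrow> 0 \<le> uu s x"
  by (simp add: uu_def w0_nonneg)

lemma w0_uu: "0 < s \<Longrightarrow> w0 s = (\<lambda>x. Gamma (1 / real s) * uu s x)"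
proof -
  assume "0 < s"
  then have "Gamma (1 / real s) > 0" by simp
  then show ?thesis by (auto simp: uu_def fun_eq_iff)
qed

lemma aux_div2: "(N::real) \<noteq> 0 \<Longrightarrow> Q \<noteq> 0 \<Longrightarrow> GS \<noteq> 0 \<Longrightarrow> G \<noteq> 0 \<Longrightarrow>
   P / Q * (GS / G) = (P / N / G) / (Q / (GS * N))"
  by (simp add: field_simps)

lemma uu_ratio:
  assumes s: "0 < s"
  shows "(\<lambda>n. uu s (Suc n) / cc (1 / real s) (Suc n)) \<longlonglongrightarrow> 1"
proof -
  define b where "b = 1 / real s"
  have b: "0 < b" using s by (simp add: b_def)
  have G: "Gamma b > 0" using b by simp
  have A: "(\<lambda>n. real (Suc n) powr b / real n powr b) \<longlonglongrightarrow> 1" using b by real_asymp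
  have "(\<lambda>n. (real (Suc n) powr b / real n powr b) * (Gamma_series b n / Gamma b)) \<longlonglongrightarrow> 1 * (Gamma b / Gamma b)"
    by (intro tendsto_mult A tendsto_divide Gamma_series_LIMSEQ tendsto_const) (use G in auto)
  moreover have "eventually (\<lambda>n. (real (Suc n) powr b / real n powr b) * (Gamma_series b n / Gamma b)
      = uu s (Suc n) / cc b (Suc n)) sequentially"
    using eventually_gt_at_top[of 0]
  proof eventually_elim
    case (elim n)
    have GS: "Gamma_series b n > 0"
      using elim b by (auto simp: Gamma_series_def intro!: divide_pos_pos pochhammer_pos)
    have "uu s (Suc n) = real (Suc n) powr (b - 1) / Gamma b"
      by (simp add: uu_def w0_def b_def)
    also have "real (Suc n) powr (b - 1) = real (Suc n) powr b / real (Suc n)"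
      by (simp add: powr_diff)
    finally have U: "uu s (Suc n) = real (Suc n) powr b / real (Suc n) / Gamma b" .
    show ?case unfolding U cc_Suc_GS[OF b elim] using GS G elim
      by (intro aux_div2) auto
  qed
  ultimately show ?thesis using G by (simp add: tendsto_cong b_def)
qed

lemma uu_conv:
  assumes s: "0 < s" and d: "\<delta> > 0"
  shows "\<exists>M. \<forall>x>M. \<bar>uu s x - cc (1 / real s) x\<bar> \<le> \<delta> * cc (1 / real s) x"
proof -
  from uu_ratio[OF s] d obtain N where N: "\<And>n. n \<ge> N \<Longrightarrow> \<bar>uu s (Suc n) / cc (1 / real s) (Suc n) - 1\<bar> < \<delta>"
    by (auto simp: LIMSEQ_iff)
  show ?thesis
  proof (intro exI allI impI)
    fix x assume x: "x > N"
    then obtain n where n: "x = Suc n" "n \<ge> N" by (cases x) auto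
    have c: "cc (1 / real s) x > 0" using s by (intro cc_pos) simp
    have "\<bar>uu s x / cc (1 / real s) x - 1\<bar> < \<delta>" using N[OF n(2)] n by simp
    then have "\<bar>(uu s x - cc (1 / real s) x) / cc (1 / real s) x\<bar> < \<delta>" using c by (simp add: diff_divide_distrib)
    then show "\<bar>uu s x - cc (1 / real s) x\<bar> \<le> \<delta> * cc (1 / real s) x" using c by (simp add: abs_div field_simps)
  qed
qed

lemma uu_bound:
  assumes s: "0 < s"
  shows "\<exists>R. \<forall>x. uu s x \<le> R * cc (1 / real s) x"
proof -
  have "Bseq (\<lambda>n. uu s (Suc n) / cc (1 / real s) (Suc n))"
    using uu_ratio[OF s] by (intro convergent_imp_Bseq) (auto simp: convergent_def)
  then obtain K where K: "K > 0" "\<And>n. norm (uu s (Suc n) / cc (1 / real s) (Suc n)) \<le> K"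
    by (auto simp: Bseq_def)
  show ?thesis
  proof (intro exI allI)
    fix x
    have c: "cc (1 / real s) x > 0" using s by (intro cc_pos) simp
    show "uu s x \<le> K * cc (1 / real s) x"
    proof (cases x)
      case 0
      then show ?thesis using c K by (simp add: uu_def w0_def)
    next
      case (Suc n)
      have "uu s x / cc (1 / real s) x \<le> K" using K(2)[of n] Suc c uu_nonneg[of s x] s by simp
      then show ?thesis using c by (simp add: field_simps)
    qed
  qed
qed

lemma Phi_uu_main:
  assumes s: "2 \<le> s"
  shows "(\<lambda>m. Phi (uu s) s m) \<longlonglongrightarrow> 1"
proof -
  obtain k where k: "s = Suc k" "1 \<le> k" using s by (cases s) auto
  obtain R where R: "\<And>x. uu s x \<le> R * cc (1 / real s) x" using uu_bound[of s] s by auto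
  have "(\<lambda>m. Phi (uu s) (Suc k) m) \<longlonglongrightarrow> 1"
  proof (rule Phi_limit[where c = "cc (1 / real s)" and R = R])
    show "\<And>x. 0 \<le> cc (1 / real s) x" by (rule cc_nonneg) simp
    show "\<And>x. 0 \<le> uu s x" using s by (intro uu_nonneg) auto
    show "\<And>x. uu s x \<le> R * cc (1 / real s) x" by (rule R)
    show "\<And>\<delta>. \<delta> > 0 \<Longrightarrow> \<exists>M. \<forall>x>M. \<bar>uu s x - cc (1 / real s) x\<bar> \<le> \<delta> * cc (1 / real s) x"
      using s by (intro uu_conv) auto
    show "\<And>m. Phi (cc (1 / real s)) (Suc k) m = 1"
      using k by (simp add: Phi_cc cc_one del: of_nat_Suc)
    show "(\<lambda>m. Phi (cc (1 / real s)) k m) \<longlonglongrightarrow> 0"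
      unfolding Phi_cc using k by (intro cc_lim0) (auto simp: field_simps)
  qed
  then show ?thesis using k by simp
qed

lemma Phi_uu_small:
  assumes s: "2 \<le> s" and r: "r < s"
  shows "(\<lambda>m. Phi (uu s) r m) \<longlonglongrightarrow> 0"
proof -
  obtain R where R: "\<And>x. uu s x \<le> R * cc (1 / real s) x" using uu_bound[of s] s by auto
  have le: "Phi (uu s) r m \<le> R ^ r * cc (real r * (1 / real s)) m" for m
  proof -
    have "Phi (uu s) r m \<le> R ^ r * Phi (cc (1 / real s)) r m"
      by (rule Phi_le_R[of "uu s" R "cc (1 / real s)" r m]) (use R uu_nonneg[of s] s in auto)
    then show ?thesis by (simp only: Phi_cc)
  qed
  have ge: "0 \<le> Phi (uu s) r m" for m by (rule Phi_nonneg) (use uu_nonneg[of s] s in auto)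
  have lim: "cc (real r * (1 / real s)) \<longlonglongrightarrow> 0"
  proof (cases "r = 0")
    case True
    have "eventually (\<lambda>m. 0 = cc (real r * (1 / real s)) m) sequentially"
      using eventually_gt_at_top[of 0] by eventually_elim (simp add: True cc_def pochhammer_0_left)
    then show ?thesis by (simp add: tendsto_cong)
  next
    case False
    then show ?thesis using r s by (intro cc_lim0) (auto simp: field_simps)
  qed
  have "(\<lambda>m. R ^ r * cc (real r * (1 / real s)) m) \<longlonglongrightarrow> R ^ r * 0"
    by (intro tendsto_mult tendsto_const lim)
  then have T: "(\<lambda>m. R ^ r * cc (real r * (1 / real s)) m) \<longlonglongrightarrow> 0" by simp
  show ?thesis
    by (rule tendsto_sandwich[OF _ _ tendsto_const T]) (use le ge in auto)
qed

lemma Phi_w0_main: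
  assumes s: "2 \<le> s"
  shows "(\<lambda>m. Phi (w0 s) s m) \<longlonglongrightarrow> Gamma (1 / real s) ^ s"
proof -
  have "(\<lambda>m. Gamma (1 / real s) ^ s * Phi (uu s) s m) \<longlonglongrightarrow> Gamma (1 / real s) ^ s * 1"
    by (intro tendsto_mult tendsto_const Phi_uu_main s)
  then show ?thesis using s by (simp add: w0_uu Phi_scale)
qed

lemma Phi_w0_small:
  assumes s: "2 \<le> s" and r: "r < s"
  shows "(\<lambda>m. Phi (w0 s) r m) \<longlonglongrightarrow> 0"
proof -
  have "(\<lambda>m. Gamma (1 / real s) ^ r * Phi (uu s) r m) \<longlonglongrightarrow> Gamma (1 / real s) ^ r * 0"
    by (intro tendsto_mult tendsto_const Phi_uu_small s r)
  then show ?thesis using s by (simp add: w0_uu Phi_scale)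
qed

definition Om :: "nat \<Rightarrow> nat \<Rightarrow> nat set set" where
  "Om s n = {\<omega>. finite \<omega> \<and> \<omega> \<subseteq> {1..} \<and> n \<in> sigma_set s \<omega>}"

definition Sn :: "nat \<Rightarrow> nat \<Rightarrow> nat set set" where
  "Sn s n = {\<omega>. finite \<omega> \<and> \<omega> \<subseteq> {1..} \<and> card \<omega> = s \<and> (\<Sum>x\<in>\<omega>. x) = n}"

definition W :: "nat \<Rightarrow> nat set \<Rightarrow> real" where
  "W s \<omega> = (\<Prod>x\<in>\<omega>. w0 s x)"

lemma W_nonneg: "0 \<le> W s \<omega>"
  unfolding W_def by (intro prod_nonneg) (simp add: w0_nonneg)

lemma w0_le1: "w0 s x \<le> 1"
proof (cases "x = 0")
  case False
  have e: "1 / real s - 1 \<le> 0" by (cases s) auto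
  have "real x powr (1 / real s - 1) \<le> real x powr 0"
    using False e by (intro powr_mono) auto
  then show ?thesis using False by (simp add: w0_def)
qed (simp add: w0_def)

lemma sigma_set_iff: "n \<in> sigma_set s \<omega> \<longleftrightarrow> (\<exists>a. (\<forall>x\<in>\<omega>. a x \<ge> 1) \<and> (\<Sum>x\<in>\<omega>. a x) = s \<and> (\<Sum>x\<in>\<omega>. a x * x) = n)"
  unfolding sigma_set_def by blast

lemma Om_props:
  assumes "\<omega> \<in> Om s n"
  shows "card \<omega> \<le> s" "\<omega> \<subseteq> {1..n}" "finite \<omega>"
proof -
  from assms obtain a where fin: "finite \<omega>" and pos: "\<omega> \<subseteq> {1..}" and a: "\<forall>x\<in>\<omega>. a x \<ge> 1"
    "(\<Sum>x\<in>\<omega>. a x) = s" "(\<Sum>x\<in>\<omega>. a x * x) = n"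
    by (auto simp: Om_def sigma_set_iff)
  have "card \<omega> = (\<Sum>x\<in>\<omega>. 1)" by simp
  also have "\<dots> \<le> (\<Sum>x\<in>\<omega>. a x)" using a by (intro sum_mono) auto
  finally show "card \<omega> \<le> s" using a by simp
  show "\<omega> \<subseteq> {1..n}"
  proof
    fix x assume x: "x \<in> \<omega>"
    have "x \<le> a x * x" using a x by simp
    also have "\<dots> \<le> (\<Sum>x\<in>\<omega>. a x * x)" using x fin by (intro member_le_sum) auto
    finally show "x \<in> {1..n}" using a pos x by auto
  qed
  show "finite \<omega>" by fact
qed

lemma Om_finite: "finite (Om s n)"
proof -
  have "Om s n \<subseteq> Pow {1..n}" using Om_props(2) by blast
  then show ?thesis by (rule finite_subset) simp
qed

lemma Om_card_s:
  assumes "\<omega> \<in> Om s n" "card \<omega> = s"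
  shows "\<omega> \<in> Sn s n"
proof -
  from assms obtain a where fin: "finite \<omega>" and pos: "\<omega> \<subseteq> {1..}" and a: "\<forall>x\<in>\<omega>. a x \<ge> 1"
    "(\<Sum>x\<in>\<omega>. a x) = s" "(\<Sum>x\<in>\<omega>. a x * x) = n"
    by (auto simp: Om_def sigma_set_iff)
  have "(\<Sum>x\<in>\<omega>. a x - 1) = (\<Sum>x\<in>\<omega>. a x) - (\<Sum>x\<in>\<omega>. 1)"
    using a by (intro sum_subtractf_nat) auto
  also have "\<dots> = 0" using a assms(2) by simp
  finally have "\<forall>x\<in>\<omega>. a x - 1 = 0" using fin by simp
  then have a1: "\<forall>x\<in>\<omega>. a x = 1" using a by force
  then have "(\<Sum>x\<in>\<omega>. x) = n" using a(3) by simp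
  then show ?thesis using fin pos assms(2) by (simp add: Sn_def)
qed

lemma Sn_Om: "Sn s n \<subseteq> Om s n"
proof
  fix \<omega> assume "\<omega> \<in> Sn s n"
  then show "\<omega> \<in> Om s n"
    unfolding Om_def Sn_def sigma_set_iff by (intro CollectI conjI exI[of _ "\<lambda>_. 1"]) auto
qed

lemma Sn_finite: "finite (Sn s n)"
  using Sn_Om Om_finite finite_subset by blast

lemma map2_rep: "length xs = k \<Longrightarrow> map2 (*) (replicate k (1::nat)) xs = xs"
  by (induction xs arbitrary: k) (auto simp: length_Suc_conv)

lemma map2_rep': "length xs = k \<Longrightarrow> map2 (*) (replicate k (Suc 0)) xs = xs"
  by (induction xs arbitrary: k) (auto simp: length_Suc_conv)

lemma WT_rep: "WT (replicate k 1) n = {xs. length xs = k \<and> sum_list xs = n}"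
  unfolding WT_def by (auto simp: map2_rep')

lemma prod_list_distinct: "distinct xs \<Longrightarrow> prod_list (map f xs) = prod f (set xs)"
  by (induction xs) auto

lemma prod_list_nonneg: "(\<And>x. 0 \<le> f x) \<Longrightarrow> (\<And>x. f x \<le> (1::real)) \<Longrightarrow> 0 \<le> prod_list (map f xs)"
  by (induction xs) (auto intro: mult_nonneg_nonneg)

lemma prod_list_le_set:
  assumes "\<And>x. 0 \<le> f x" "\<And>x. f x \<le> (1::real)"
  shows "prod_list (map f xs) \<le> prod f (set xs)"
proof (induction xs)
  case Nil then show ?case by simp
next
  case (Cons x xs)
  have P: "0 \<le> prod f (set xs)" using assms by (intro prod_nonneg) auto
  have PL: "0 \<le> prod_list (map f xs)" using assms by (rule prod_list_nonneg)
  show ?case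
  proof (cases "x \<in> set xs")
    case True
    have "prod_list (map f (x # xs)) = f x * prod_list (map f xs)" by simp
    also have "\<dots> \<le> 1 * prod f (set xs)" using Cons assms P PL by (intro mult_mono) auto
    finally show ?thesis using True by (simp add: insert_absorb)
  next
    case False
    then show ?thesis using False Cons assms by (auto intro: mult_left_mono)
  qed
qed

lemma prod_list_zero: "0 \<in> set xs \<Longrightarrow> prod_list (map (w0 s) xs) = 0"
  by (induction xs) (auto simp: w0_def)

lemma main_identity:
  "fact s * (\<Sum>\<omega>\<in>Sn s n. W s \<omega>) = (\<Sum>xs\<in>{xs\<in>WT (replicate s 1) n. distinct xs}. prod_list (map (w0 s) xs))"
proof -
  let ?A = "{xs\<in>WT (replicate s 1) n. distinct xs}"
  let ?B = "{xs\<in>?A. 0 \<notin> set xs}"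
  have finA: "finite ?A" using WT_finite[of "replicate s 1" n] by auto
  have S1: "(\<Sum>xs\<in>?A. prod_list (map (w0 s) xs)) = (\<Sum>xs\<in>?B. prod_list (map (w0 s) xs))"
    by (rule sum.mono_neutral_right[OF finA]) (auto simp: prod_list_zero)
  have S2: "?B = (\<Union>\<omega>\<in>Sn s n. permutations_of_set \<omega>)"
  proof (intro equalityI subsetI)
    fix xs assume xs: "xs \<in> ?B"
    then have xs': "length xs = s" "sum_list xs = n" "distinct xs" "0 \<notin> set xs"
      by (auto simp: WT_rep[simplified])
    then have "set xs \<subseteq> {1..}" by (auto simp: Suc_le_eq intro!: gr0I)
    then have "set xs \<in> Sn s n" using xs'
      by (auto simp: Sn_def distinct_card distinct_sum_list_conv_Sum)
    then show "xs \<in> (\<Union>\<omega>\<in>Sn s n. permutations_of_set \<omega>)" using xs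
      by (auto simp: permutations_of_set_def)
  next
    fix xs assume "xs \<in> (\<Union>\<omega>\<in>Sn s n. permutations_of_set \<omega>)"
    then obtain \<omega> where \<omega>: "\<omega> \<in> Sn s n" "set xs = \<omega>" "distinct xs" by (auto simp: permutations_of_set_def)
    then show "xs \<in> ?B"
      by (auto simp: Sn_def WT_rep[simplified] distinct_card[symmetric] distinct_sum_list_conv_Sum)
  qed
  have "(\<Sum>xs\<in>?A. prod_list (map (w0 s) xs))
      = (\<Sum>\<omega>\<in>Sn s n. \<Sum>xs\<in>permutations_of_set \<omega>. prod_list (map (w0 s) xs))"
    unfolding S1 S2
  proof (rule sum.UNION_disjoint)
    show "finite (Sn s n)" by (rule Sn_finite)
    show "\<forall>\<omega>\<in>Sn s n. finite (permutations_of_set \<omega>)" by (auto simp: Sn_def)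
    show "\<forall>\<omega>\<in>Sn s n. \<forall>\<omega>'\<in>Sn s n. \<omega> \<noteq> \<omega>' \<longrightarrow> permutations_of_set \<omega> \<inter> permutations_of_set \<omega>' = {}"
      by (auto simp: permutations_of_set_def)
  qed
  also have "\<dots> = (\<Sum>\<omega>\<in>Sn s n. fact s * W s \<omega>)"
  proof (rule sum.cong[OF refl])
    fix \<omega> assume \<omega>: "\<omega> \<in> Sn s n"
    have "(\<Sum>xs\<in>permutations_of_set \<omega>. prod_list (map (w0 s) xs)) = (\<Sum>xs\<in>permutations_of_set \<omega>. W s \<omega>)"
      by (intro sum.cong) (auto simp: permutations_of_set_def prod_list_distinct W_def)
    also have "\<dots> = fact s * W s \<omega>" using \<omega> by (simp add: Sn_def)
    finally show "(\<Sum>xs\<in>permutations_of_set \<omega>. prod_list (map (w0 s) xs)) = fact s * W s \<omega>" .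
  qed
  finally have X: "(\<Sum>xs\<in>?A. prod_list (map (w0 s) xs)) = (\<Sum>\<omega>\<in>Sn s n. fact s * W s \<omega>)" .
  have Y: "fact s * (\<Sum>\<omega>\<in>Sn s n. W s \<omega>) = (\<Sum>\<omega>\<in>Sn s n. fact s * W s \<omega>)" by (simp add: sum_distrib_left)
  show ?thesis by (rule trans[OF Y X[symmetric]])
qed

lemma nondistinct_bound:
  "(\<Sum>xs\<in>{xs\<in>WT (replicate s 1) n. \<not> distinct xs}. prod_list (map (w0 s) xs))
     \<le> real (s^s) * (\<Sum>\<omega>\<in>{\<omega>\<in>Om s n. card \<omega> < s}. W s \<omega>)"
proof -
  let ?B = "{xs\<in>WT (replicate s 1) n. \<not> distinct xs}"
  let ?C = "{xs\<in>?B. 0 \<notin> set xs}"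
  let ?O = "{\<omega>\<in>Om s n. card \<omega> < s}"
  have finB: "finite ?B" using WT_finite[of "replicate s 1" n] by auto
  have finC: "finite ?C" by (rule finite_subset[OF _ finB]) auto
  have C: "length xs = s" "sum_list xs = n" "\<not> distinct xs" "0 \<notin> set xs" if "xs \<in> ?C" for xs
    using that by (auto simp: WT_rep[simplified])
  have "(\<Sum>xs\<in>?B. prod_list (map (w0 s) xs)) = (\<Sum>xs\<in>?C. prod_list (map (w0 s) xs))"
    by (rule sum.mono_neutral_right[OF finB]) (auto simp: prod_list_zero)
  also have "\<dots> \<le> (\<Sum>xs\<in>?C. W s (set xs))"
    unfolding W_def by (intro sum_mono prod_list_le_set) (auto simp: w0_nonneg w0_le1)
  also have "\<dots> = (\<Sum>\<omega>\<in>set ` ?C. \<Sum>xs\<in>{xs. xs \<in> ?C \<and> set xs = \<omega>}. W s (set xs))"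
    by (rule sum.image_gen[OF finC])
  also have "\<dots> \<le> (\<Sum>\<omega>\<in>set ` ?C. real (s^s) * W s \<omega>)"
  proof (rule sum_mono)
    fix \<omega> assume "\<omega> \<in> set ` ?C"
    then obtain ys where ys: "ys \<in> ?C" "\<omega> = set ys" by auto
    have cw: "card \<omega> \<le> s" using C[OF ys(1)] ys(2) by (metis card_length)
    have sub: "{xs. xs \<in> ?C \<and> set xs = \<omega>} \<subseteq> {xs. set xs \<subseteq> \<omega> \<and> length xs = s}"
    proof
      fix xs assume xs: "xs \<in> {xs. xs \<in> ?C \<and> set xs = \<omega>}"
      then have "length xs = s" using C(1) by blast
      then show "xs \<in> {xs. set xs \<subseteq> \<omega> \<and> length xs = s}" using xs by blast
    qed
    have "card {xs. xs \<in> ?C \<and> set xs = \<omega>} \<le> card {xs. set xs \<subseteq> \<omega> \<and> length xs = s}"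
      using sub ys by (intro card_mono finite_lists_length_eq) auto
    also have "\<dots> = card \<omega> ^ s" using ys by (simp add: card_lists_length_eq)
    also have "\<dots> \<le> s ^ s" using cw by (rule power_mono) simp
    finally have cd: "card {xs. xs \<in> ?C \<and> set xs = \<omega>} \<le> s ^ s" .
    have "(\<Sum>xs\<in>{xs. xs \<in> ?C \<and> set xs = \<omega>}. W s (set xs)) = real (card {xs. xs \<in> ?C \<and> set xs = \<omega>}) * W s \<omega>"
      by simp
    also have "\<dots> \<le> real (s^s) * W s \<omega>"
      using cd W_nonneg[of s \<omega>] by (intro mult_right_mono) auto
    finally show "(\<Sum>xs\<in>{xs. xs \<in> ?C \<and> set xs = \<omega>}. W s (set xs)) \<le> real (s^s) * W s \<omega>" .
  qed
  also have "\<dots> \<le> (\<Sum>\<omega>\<in>?O. real (s^s) * W s \<omega>)"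
  proof (rule sum_mono2)
    show "finite ?O" using Om_finite by auto
    show "set ` ?C \<subseteq> ?O"
    proof
      fix \<omega> assume "\<omega> \<in> set ` ?C"
      then obtain xs where xs: "xs \<in> ?C" "\<omega> = set xs" by auto
      note c = C[OF xs(1)]
      have "card (set xs) \<noteq> length xs" using c(3) card_distinct by blast
      then have "card \<omega> < s" using c(1) xs(2) card_length le_neq_implies_less by blast
      moreover have "n \<in> sigma_set s \<omega>"
        unfolding sigma_set_iff
      proof (intro exI conjI ballI)
        fix x assume "x \<in> \<omega>" then show "1 \<le> count_list xs x"
          using xs(2) count_list_0_iff[of xs x] by auto
      next
        show "(\<Sum>x\<in>\<omega>. count_list xs x) = s" using xs(2) c(1) by (simp add: sum_count_set)
      next
        have "sum_list (map (\<lambda>x. x) xs) = (\<Sum>x\<in>set xs. count_list xs x * x)"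
          by (rule sum_list_map_eq_sum_count)
        then show "(\<Sum>x\<in>\<omega>. count_list xs x * x) = n" using xs(2) c(2) by simp
      qed
      moreover have "\<omega> \<subseteq> {1..}" using c(4) xs(2) by (auto simp: Suc_le_eq intro!: gr0I)
      moreover have "finite \<omega>" using xs(2) by simp
      ultimately show "\<omega> \<in> ?O" by (simp add: Om_def)
    qed
    show "\<And>\<omega>. \<omega> \<in> ?O - set ` ?C \<Longrightarrow> 0 \<le> real (s^s) * W s \<omega>" by (simp add: W_nonneg)
  qed
  also have "\<dots> = real (s^s) * (\<Sum>\<omega>\<in>?O. W s \<omega>)" by (simp add: sum_distrib_left)
  finally show ?thesis .
qed

lemma w0_scale:
  assumes "1 \<le> a" "a \<le> s"
  shows "w0 s x \<le> real s * w0 s (a * x)"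
proof (cases "x = 0")
  case True then show ?thesis by (simp add: w0_def)
next
  case False
  have s: "0 < s" using assms by simp
  let ?e = "1 / real s - 1"
  have ax: "a * x \<noteq> 0" using False assms by simp
  have "real (a * x) powr ?e = real a powr ?e * real x powr ?e" by (simp add: powr_mult)
  moreover have "real a powr ?e \<ge> real a powr (-1)"
    using assms by (intro powr_mono) auto
  moreover have "real a powr (-1) = 1 / real a" using assms by (simp add: powr_minus divide_inverse)
  moreover have "1 / real a \<ge> 1 / real s" using assms by (simp add: frac_le)
  ultimately have A: "real a powr ?e \<ge> 1 / real s" and B: "real (a * x) powr ?e = real a powr ?e * real x powr ?e"
    by linarith+
  have "(1 / real s) * real x powr ?e \<le> real a powr ?e * real x powr ?e"
    using A by (intro mult_right_mono) auto
  then have "real (a * x) powr ?e \<ge> (1 / real s) * real x powr ?e" using B by simp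
  then have "real s * real (a * x) powr ?e \<ge> real x powr ?e" using s by (simp add: field_simps)
  then show ?thesis using False ax by (simp add: w0_def)
qed

lemma H_nonneg: "(\<And>x. 0 \<le> f x) \<Longrightarrow> 0 \<le> H f as m"
  by (induction as arbitrary: m) (auto intro!: sum_nonneg mult_nonneg_nonneg)

lemma H_w0_bound:
  assumes "set as \<subseteq> {1..s}"
  shows "H (w0 s) as n \<le> real s ^ length as * Phi (w0 s) (length as) n"
  using assms
proof (induction as arbitrary: n)
  case Nil then show ?case by (simp add: Phi_0)
next
  case (Cons a as)
  have a: "1 \<le> a" "a \<le> s" using Cons.prems by auto
  have as: "set as \<subseteq> {1..s}" using Cons.prems by auto
  let ?k = "length as"
  have Pn: "\<And>m. 0 \<le> Phi (w0 s) ?k m" by (rule Phi_nonneg) (simp add: w0_nonneg)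
  have "H (w0 s) (a # as) n = (\<Sum>x\<in>{x\<in>{..n}. a * x \<le> n}. w0 s x * H (w0 s) as (n - a * x))"
    by (subst sum.inter_filter) auto
  also have "\<dots> \<le> (\<Sum>x\<in>{x\<in>{..n}. a * x \<le> n}. (real s * w0 s (a * x)) * (real s ^ ?k * Phi (w0 s) ?k (n - a * x)))"
    using Cons.IH[OF as] w0_scale[OF a] w0_nonneg H_nonneg[of "w0 s"] by (intro sum_mono mult_mono) auto
  also have "\<dots> = real s ^ Suc ?k * (\<Sum>x\<in>{x\<in>{..n}. a * x \<le> n}. w0 s (a * x) * Phi (w0 s) ?k (n - a * x))"
    by (simp add: sum_distrib_left mult_ac)
  also have "(\<Sum>x\<in>{x\<in>{..n}. a * x \<le> n}. w0 s (a * x) * Phi (w0 s) ?k (n - a * x))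
      = (\<Sum>y\<in>(\<lambda>x. a * x) ` {x\<in>{..n}. a * x \<le> n}. w0 s y * Phi (w0 s) ?k (n - y))"
    using a by (subst sum.reindex) (auto simp: inj_on_def)
  also have "\<dots> \<le> (\<Sum>y\<le>n. w0 s y * Phi (w0 s) ?k (n - y))"
    using Pn by (intro sum_mono2) (auto simp: w0_nonneg)
  also have "\<dots> = Phi (w0 s) (length (a # as)) n" by (simp add: Phi_Suc)
  finally show ?case
    by (simp add: mult_left_mono)
qed

definition AS :: "nat \<Rightarrow> nat list set" where
  "AS s = {as. set as \<subseteq> {1..s} \<and> length as < s}"

lemma AS_finite: "finite (AS s)"
proof -
  have "AS s \<subseteq> {xs. set xs \<subseteq> {1..s} \<and> length xs \<le> s}" by (auto simp: AS_def)
  then show ?thesis by (rule finite_subset) (intro finite_lists_length_le, simp)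
qed

lemma map2_map: "map2 (*) (map a xs) xs = map (\<lambda>x. a x * x) (xs::nat list)"
  by (induction xs) auto

lemma small_sets_bound:
  "(\<Sum>\<omega>\<in>{\<omega>\<in>Om s n. card \<omega> < s}. W s \<omega>) \<le> (\<Sum>as\<in>AS s. H (w0 s) as n)"
proof -
  let ?O = "{\<omega>\<in>Om s n. card \<omega> < s}"
  define D where "D = (SIGMA as:AS s. {xs\<in>WT as n. distinct xs})"
  define g where "g = (\<lambda>(as::nat list, xs::nat list). set xs)"
  have AS0: "0 \<notin> set as" if "as \<in> AS s" for as using that by (auto simp: AS_def)
  have finD: "finite D" unfolding D_def
    using AS_finite AS0 WT_finite by (intro finite_SigmaI) auto
  have sub: "?O \<subseteq> g ` D"
  proof
    fix \<omega> assume \<omega>: "\<omega> \<in> ?O"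
    then obtain a where fin: "finite \<omega>" and a: "\<forall>x\<in>\<omega>. a x \<ge> 1"
      "(\<Sum>x\<in>\<omega>. a x) = s" "(\<Sum>x\<in>\<omega>. a x * x) = n" and cs: "card \<omega> < s"
      by (auto simp: Om_def sigma_set_iff)
    define xs where "xs = sorted_list_of_set \<omega>"
    have xs: "set xs = \<omega>" "distinct xs" "length xs = card \<omega>" using fin by (auto simp: xs_def)
    have "a x \<le> s" if "x \<in> \<omega>" for x
      using member_le_sum[of x \<omega> a] that fin a(2) by simp
    then have "map a xs \<in> AS s" using a xs cs by (auto simp: AS_def)
    moreover have "xs \<in> WT (map a xs) n"
      using xs a by (simp add: WT_def map2_map sum_list_distinct_conv_sum_set)
    ultimately have "(map a xs, xs) \<in> D" using xs by (simp add: D_def)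
    then show "\<omega> \<in> g ` D" using xs by (force simp: g_def)
  qed
  have "(\<Sum>\<omega>\<in>?O. W s \<omega>) \<le> (\<Sum>\<omega>\<in>g ` D. W s \<omega>)"
    using sub finD by (intro sum_mono2) (auto simp: W_nonneg)
  also have "\<dots> \<le> (\<Sum>p\<in>D. W s (g p))"
    using sum_image_le[OF finD, of "W s" g] by (simp add: W_nonneg o_def)
  also have "\<dots> = (\<Sum>as\<in>AS s. \<Sum>xs\<in>{xs\<in>WT as n. distinct xs}. W s (set xs))"
    unfolding D_def g_def using AS_finite AS0 WT_finite
    by (subst sum.Sigma) (auto simp: case_prod_unfold)
  also have "\<dots> \<le> (\<Sum>as\<in>AS s. H (w0 s) as n)"
  proof (rule sum_mono)
    fix as assume as: "as \<in> AS s"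
    have "(\<Sum>xs\<in>{xs\<in>WT as n. distinct xs}. W s (set xs)) = (\<Sum>xs\<in>{xs\<in>WT as n. distinct xs}. prod_list (map (w0 s) xs))"
      by (intro sum.cong) (auto simp: W_def prod_list_distinct)
    also have "\<dots> \<le> (\<Sum>xs\<in>WT as n. prod_list (map (w0 s) xs))"
      using WT_finite[OF AS0[OF as]] by (intro sum_mono2) (auto intro: prod_list_nonneg w0_nonneg w0_le1)
    also have "\<dots> = H (w0 s) as n" by (rule H_WT[OF AS0[OF as]])
    finally show "(\<Sum>xs\<in>{xs\<in>WT as n. distinct xs}. W s (set xs)) \<le> H (w0 s) as n" .
  qed
  finally show ?thesis .
qed

lemma Eprime_lim:
  assumes s: "2 \<le> s"
  shows "(\<lambda>n. \<Sum>\<omega>\<in>{\<omega>\<in>Om s n. card \<omega> < s}. W s \<omega>) \<longlonglongrightarrow> 0"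
proof -
  have lim: "(\<lambda>n. \<Sum>as\<in>AS s. real s ^ length as * Phi (w0 s) (length as) n) \<longlonglongrightarrow> (\<Sum>as\<in>AS s. real s ^ length as * 0)"
    by (intro tendsto_sum tendsto_mult tendsto_const Phi_w0_small s) (auto simp: AS_def)
  have up: "(\<Sum>\<omega>\<in>{\<omega>\<in>Om s n. card \<omega> < s}. W s \<omega>) \<le> (\<Sum>as\<in>AS s. real s ^ length as * Phi (w0 s) (length as) n)" for n
  proof -
    have "(\<Sum>\<omega>\<in>{\<omega>\<in>Om s n. card \<omega> < s}. W s \<omega>) \<le> (\<Sum>as\<in>AS s. H (w0 s) as n)" by (rule small_sets_bound)
    also have "\<dots> \<le> (\<Sum>as\<in>AS s. real s ^ length as * Phi (w0 s) (length as) n)"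
      by (intro sum_mono H_w0_bound) (auto simp: AS_def)
    finally show ?thesis .
  qed
  show ?thesis
  proof (rule tendsto_sandwich[OF _ _ tendsto_const])
    show "eventually (\<lambda>n. 0 \<le> (\<Sum>\<omega>\<in>{\<omega>\<in>Om s n. card \<omega> < s}. W s \<omega>)) sequentially"
      by (intro always_eventually allI sum_nonneg W_nonneg)
    show "eventually (\<lambda>n. (\<Sum>\<omega>\<in>{\<omega>\<in>Om s n. card \<omega> < s}. W s \<omega>) \<le> (\<Sum>as\<in>AS s. real s ^ length as * Phi (w0 s) (length as) n)) sequentially"
      by (intro always_eventually allI up)
    show "(\<lambda>n. \<Sum>as\<in>AS s. real s ^ length as * Phi (w0 s) (length as) n) \<longlonglongrightarrow> 0"
      using lim by simp
  qed
qed

lemma G_lim: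
  assumes s: "2 \<le> s"
  shows "(\<lambda>n. \<Sum>\<omega>\<in>Sn s n. W s \<omega>) \<longlonglongrightarrow> Gamma (1 / real s) ^ s / fact s"
proof -
  define ND where "ND n = (\<Sum>xs\<in>{xs\<in>WT (replicate s 1) n. \<not> distinct xs}. prod_list (map (w0 s) xs))" for n
  define E where "E n = (\<Sum>\<omega>\<in>{\<omega>\<in>Om s n. card \<omega> < s}. W s \<omega>)" for n
  have split: "Phi (w0 s) s n = fact s * (\<Sum>\<omega>\<in>Sn s n. W s \<omega>) + ND n" for n
  proof -
    have fin: "finite (WT (replicate s 1) n)" by (rule WT_finite) simp
    have "Phi (w0 s) s n = (\<Sum>xs\<in>WT (replicate s 1) n. prod_list (map (w0 s) xs))"
      unfolding Phi_def by (rule H_WT[symmetric]) simp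
    also have "\<dots> = (\<Sum>xs\<in>{xs\<in>WT (replicate s 1) n. distinct xs}. prod_list (map (w0 s) xs)) + ND n"
    proof -
      have "WT (replicate s 1) n = {xs\<in>WT (replicate s 1) n. distinct xs} \<union> {xs\<in>WT (replicate s 1) n. \<not> distinct xs}"
        by auto
      moreover have "(\<Sum>xs\<in>{xs\<in>WT (replicate s 1) n. distinct xs} \<union> {xs\<in>WT (replicate s 1) n. \<not> distinct xs}. prod_list (map (w0 s) xs))
          = (\<Sum>xs\<in>{xs\<in>WT (replicate s 1) n. distinct xs}. prod_list (map (w0 s) xs)) + (\<Sum>xs\<in>{xs\<in>WT (replicate s 1) n. \<not> distinct xs}. prod_list (map (w0 s) xs))"
        by (rule sum.union_disjoint) (use fin in auto)
      ultimately show ?thesis unfolding ND_def by simp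
    qed
    finally show ?thesis by (simp add: main_identity)
  qed
  have ND0: "0 \<le> ND n" for n unfolding ND_def by (intro sum_nonneg prod_list_nonneg) (auto simp: w0_nonneg w0_le1)
  have NDle: "ND n \<le> real (s^s) * E n" for n unfolding ND_def E_def by (rule nondistinct_bound)
  have "(\<lambda>n. real (s^s) * E n) \<longlonglongrightarrow> real (s^s) * 0"
    unfolding E_def by (intro tendsto_mult tendsto_const Eprime_lim s)
  then have T: "(\<lambda>n. real (s^s) * E n) \<longlonglongrightarrow> 0" by simp
  have NDlim: "ND \<longlonglongrightarrow> 0"
  proof (rule tendsto_sandwich[OF _ _ tendsto_const T])
    show "eventually (\<lambda>n. 0 \<le> ND n) sequentially" by (intro always_eventually allI ND0)
    show "eventually (\<lambda>n. ND n \<le> real (s^s) * E n) sequentially" by (intro always_eventually allI NDle)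
  qed
  have "(\<lambda>n. (Phi (w0 s) s n - ND n) / fact s) \<longlonglongrightarrow> (Gamma (1 / real s) ^ s - 0) / fact s"
    by (intro tendsto_divide tendsto_diff Phi_w0_main s NDlim tendsto_const) simp
  moreover have "(Phi (w0 s) s n - ND n) / fact s = (\<Sum>\<omega>\<in>Sn s n. W s \<omega>)" for n
    unfolding split by simp
  ultimately show ?thesis by simp
qed

lemma incl_prob_bounds: "0 \<le> incl_prob s n" "incl_prob s n \<le> 1 / real s" "1 / real s \<le> 1"
proof -
  show "0 \<le> incl_prob s n" by (simp add: incl_prob_def)
  show "1 / real s \<le> 1" by (cases s) auto
  have e: "-1 + 1 / real s \<le> 0" by (cases s) auto
  have "real n powr (-1 + 1 / real s) \<le> 1"
  proof (cases "n = 0")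
    case False
    have "real n powr (-1 + 1 / real s) \<le> real n powr 0" using False e by (intro powr_mono) auto
    then show ?thesis using False by simp
  qed simp
  then show "incl_prob s n \<le> 1 / real s"
    unfolding incl_prob_def by (intro mult_left_le) auto
qed

lemma incl_prob_le1: "incl_prob s n \<le> 1"
  using incl_prob_bounds(2)[of s n] incl_prob_bounds(3)[of s] by linarith

lemma prob_Ec_eq:
  assumes fin: "finite \<omega>"
  shows "prob_Ec s \<omega> = 1 - (\<Prod>x\<in>\<omega>. incl_prob s x)"
proof -
  let ?M = "\<lambda>n. measure_pmf (bernoulli_pmf (incl_prob s n))"
  let ?P = "rand_set_space s"
  interpret P: prob_space ?P
    unfolding rand_set_space_def by (intro prob_space_PiM prob_space_measure_pmf)
  define E where "E = prod_emb UNIV ?M \<omega> (\<Pi>\<^sub>E j\<in>\<omega>. {True})"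
  have sp: "space ?P = UNIV" by (simp add: rand_set_space_def space_PiM)
  have Eset: "E = {f. \<omega> \<subseteq> {n. f n}}"
    by (auto simp: E_def prod_emb_def space_PiM PiE_iff restrict_def fun_eq_iff split: if_splits)
  have Esets: "E \<in> P.events"
    unfolding E_def rand_set_space_def using fin by (intro sets_PiM_I) auto
  have "{f \<in> space ?P. \<not> \<omega> \<subseteq> {n. f n}} = space ?P - E" using sp Eset by auto
  then have PE: "prob_Ec s \<omega> = 1 - P.prob E"
    unfolding prob_Ec_def using P.prob_compl[OF Esets] by simp
  have "emeasure ?P E = (\<Prod>x\<in>\<omega>. emeasure (?M x) {True})"
    unfolding E_def rand_set_space_def using fin
    by (intro emeasure_PiM_emb prob_space_measure_pmf) auto
  also have "\<dots> = (\<Prod>x\<in>\<omega>. ennreal (incl_prob s x))"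
    by (intro prod.cong refl) (simp add: emeasure_pmf_single incl_prob_bounds(1) incl_prob_le1)
  also have "\<dots> = ennreal (\<Prod>x\<in>\<omega>. incl_prob s x)"
    by (rule prod_ennreal) (simp add: incl_prob_bounds(1))
  finally have "P.prob E = (\<Prod>x\<in>\<omega>. incl_prob s x)"
    by (simp add: measure_def prod_nonneg incl_prob_bounds(1))
  then show ?thesis using PE by simp
qed

definition Nset :: "real \<Rightarrow> nat \<Rightarrow> nat set" where
  "Nset \<alpha> i = {n. i \<le> n \<and> real n \<le> real i + \<alpha> * ln (real i)}"

lemma Nset_eq:
  assumes "0 < \<alpha>" "1 \<le> i"
  shows "Nset \<alpha> i = {i..i + nat \<lfloor>\<alpha> * ln (real i)\<rfloor>}"
proof -
  have l: "0 \<le> \<alpha> * ln (real i)" using assms by simp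
  have "real n \<le> real i + \<alpha> * ln (real i) \<longleftrightarrow> n \<le> i + nat \<lfloor>\<alpha> * ln (real i)\<rfloor>" if "i \<le> n" for n
  proof -
    have "real n \<le> real i + \<alpha> * ln (real i) \<longleftrightarrow> real (n - i) \<le> \<alpha> * ln (real i)"
      using that by (simp add: of_nat_diff) linarith
    also have "\<dots> \<longleftrightarrow> int (n - i) \<le> \<lfloor>\<alpha> * ln (real i)\<rfloor>"
      by (simp add: le_floor_iff)
    also have "\<dots> \<longleftrightarrow> n - i \<le> nat \<lfloor>\<alpha> * ln (real i)\<rfloor>" using l by linarith
    also have "\<dots> \<longleftrightarrow> n \<le> i + nat \<lfloor>\<alpha> * ln (real i)\<rfloor>" using that by linarith
    finally show ?thesis .
  qed
  then show ?thesis unfolding Nset_def by auto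
qed

lemma Nset_card:
  assumes "0 < \<alpha>" "1 \<le> i"
  shows "finite (Nset \<alpha> i)" "Nset \<alpha> i \<noteq> {}" "\<alpha> * ln (real i) < real (card (Nset \<alpha> i))"
    "real (card (Nset \<alpha> i)) \<le> \<alpha> * ln (real i) + 1"
proof -
  have l: "0 \<le> \<alpha> * ln (real i)" using assms by simp
  have c: "card (Nset \<alpha> i) = nat \<lfloor>\<alpha> * ln (real i)\<rfloor> + 1"
    unfolding Nset_eq[OF assms] by simp
  show "finite (Nset \<alpha> i)" "Nset \<alpha> i \<noteq> {}" unfolding Nset_eq[OF assms] by auto
  have r: "real (nat \<lfloor>\<alpha> * ln (real i)\<rfloor>) = of_int \<lfloor>\<alpha> * ln (real i)\<rfloor>" using l by simp
  show "\<alpha> * ln (real i) < real (card (Nset \<alpha> i))" unfolding c using r by linarith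
  show "real (card (Nset \<alpha> i)) \<le> \<alpha> * ln (real i) + 1" unfolding c using r by linarith
qed

lemma Nset_ge: "n \<in> Nset \<alpha> i \<Longrightarrow> i \<le> n"
  by (simp add: Nset_def)

lemma card_over_ln:
  assumes "0 < \<alpha>"
  shows "(\<lambda>i. real (card (Nset \<alpha> i)) / ln (real i)) \<longlonglongrightarrow> \<alpha>"
proof (rule tendsto_sandwich[of "\<lambda>_. \<alpha>" _ _ "\<lambda>i. \<alpha> + 1 / ln (real i)"])
  show "eventually (\<lambda>i. \<alpha> \<le> real (card (Nset \<alpha> i)) / ln (real i)) sequentially"
    using eventually_ge_at_top[of 2]
  proof eventually_elim
    case (elim i)
    then have "ln (real i) > 0" by simp
    then show ?case using Nset_card(3)[OF assms, of i] elim by (simp add: field_simps)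
  qed
  show "eventually (\<lambda>i. real (card (Nset \<alpha> i)) / ln (real i) \<le> \<alpha> + 1 / ln (real i)) sequentially"
    using eventually_ge_at_top[of 2]
  proof eventually_elim
    case (elim i)
    then have "ln (real i) > 0" by simp
    then show ?case using Nset_card(4)[OF assms, of i] elim by (simp add: field_simps)
  qed
  show "(\<lambda>_. \<alpha>) \<longlonglongrightarrow> \<alpha>" by simp
  have "(\<lambda>i. 1 / ln (real i)) \<longlonglongrightarrow> 0" by real_asymp
  then show "(\<lambda>i. \<alpha> + 1 / ln (real i)) \<longlonglongrightarrow> \<alpha>" using tendsto_add[OF tendsto_const] by fastforce
qed

lemma avg_lim:
  assumes a: "0 < \<alpha>" and h: "h \<longlonglongrightarrow> L"
  shows "(\<lambda>i. (\<Sum>n\<in>Nset \<alpha> i. h n) / real (card (Nset \<alpha> i))) \<longlonglongrightarrow> L"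
proof (rule LIMSEQ_I)
  fix r :: real assume r: "r > 0"
  from LIMSEQ_D[OF h r] obtain K where K: "\<And>n. n \<ge> K \<Longrightarrow> norm (h n - L) < r" by blast
  show "\<exists>no. \<forall>i\<ge>no. norm ((\<Sum>n\<in>Nset \<alpha> i. h n) / real (card (Nset \<alpha> i)) - L) < r"
  proof (intro exI allI impI)
    fix i assume i: "i \<ge> max K 1"
    have fin: "finite (Nset \<alpha> i)" and ne: "Nset \<alpha> i \<noteq> {}" using Nset_card[OF a, of i] i by auto
    have cpos: "real (card (Nset \<alpha> i)) > 0" using fin ne by (simp add: card_gt_0_iff)
    have "(\<Sum>n\<in>Nset \<alpha> i. h n) / real (card (Nset \<alpha> i)) - L = (\<Sum>n\<in>Nset \<alpha> i. h n - L) / real (card (Nset \<alpha> i))"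
      using cpos by (simp add: sum_subtractf field_simps)
    moreover have "\<bar>\<Sum>n\<in>Nset \<alpha> i. h n - L\<bar> < real (card (Nset \<alpha> i)) * r"
    proof -
      have "\<bar>\<Sum>n\<in>Nset \<alpha> i. h n - L\<bar> \<le> (\<Sum>n\<in>Nset \<alpha> i. \<bar>h n - L\<bar>)" by (rule sum_abs)
      also have "\<dots> < (\<Sum>n\<in>Nset \<alpha> i. r)"
        using fin ne K Nset_ge i by (intro sum_strict_mono) force+
      also have "\<dots> = real (card (Nset \<alpha> i)) * r" by simp
      finally show ?thesis .
    qed
    ultimately show "norm ((\<Sum>n\<in>Nset \<alpha> i. h n) / real (card (Nset \<alpha> i)) - L) < r"
      using cpos by (simp add: abs_div field_simps)
  qed
qed

lemma sum_over_ln: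
  assumes a: "0 < \<alpha>" and h: "h \<longlonglongrightarrow> L"
  shows "(\<lambda>i. (\<Sum>n\<in>Nset \<alpha> i. h n) / ln (real i)) \<longlonglongrightarrow> \<alpha> * L"
proof -
  have "(\<lambda>i. real (card (Nset \<alpha> i)) / ln (real i) * ((\<Sum>n\<in>Nset \<alpha> i. h n) / real (card (Nset \<alpha> i)))) \<longlonglongrightarrow> \<alpha> * L"
    by (intro tendsto_mult card_over_ln avg_lim a h)
  moreover have "eventually (\<lambda>i. real (card (Nset \<alpha> i)) / ln (real i) * ((\<Sum>n\<in>Nset \<alpha> i. h n) / real (card (Nset \<alpha> i)))
      = (\<Sum>n\<in>Nset \<alpha> i. h n) / ln (real i)) sequentially"
    using eventually_ge_at_top[of 1]
  proof eventually_elim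
    case (elim i)
    have "real (card (Nset \<alpha> i)) > 0" using Nset_card[OF a elim] by (simp add: card_gt_0_iff)
    then show ?case by simp
  qed
  ultimately show ?thesis by (simp add: tendsto_cong)
qed

definition Qp :: "nat \<Rightarrow> nat set \<Rightarrow> real" where
  "Qp s \<omega> = (\<Prod>x\<in>\<omega>. incl_prob s x)"

lemma Omega_eq:
  "Omega_set s {real i .. real i + \<alpha> * ln (real i)} = (\<Union>n\<in>Nset \<alpha> i. Om s n)"
  unfolding Omega_set_def Om_def Nset_def by auto

lemma Omega_finite:
  assumes "0 < \<alpha>" "1 \<le> i"
  shows "finite (Omega_set s {real i .. real i + \<alpha> * ln (real i)})"
  unfolding Omega_eq using Nset_card(1)[OF assms] Om_finite by auto

lemma Qp_W:
  assumes "\<omega> \<subseteq> {1..}" "finite \<omega>"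
  shows "Qp s \<omega> = W s \<omega> / real s ^ card \<omega>"
proof -
  have "Qp s \<omega> = (\<Prod>x\<in>\<omega>. w0 s x / real s)"
    unfolding Qp_def using assms(1)
    by (intro prod.cong) (auto simp: incl_prob_def w0_def algebra_simps)
  also have "\<dots> = W s \<omega> / real s ^ card \<omega>"
    by (simp add: prod_dividef W_def)
  finally show ?thesis .
qed

lemma Qp_le_W:
  assumes "1 \<le> s" "\<omega> \<subseteq> {1..}" "finite \<omega>"
  shows "Qp s \<omega> \<le> W s \<omega>"
proof -
  have "1 \<le> real s ^ card \<omega>" using assms by simp
  then have "W s \<omega> / real s ^ card \<omega> \<le> W s \<omega> / 1"
    using W_nonneg[of s \<omega>] assms(1) by (intro divide_left_mono) auto
  then show ?thesis unfolding Qp_W[OF assms(2,3)] by simp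
qed

lemma T_bounds:
  assumes s: "2 \<le> s" and a: "0 < \<alpha>" and i: "1 \<le> i"
  defines "\<Omega> \<equiv> Omega_set s {real i .. real i + \<alpha> * ln (real i)}"
  shows "(\<Sum>n\<in>Nset \<alpha> i. (\<Sum>\<omega>\<in>Sn s n. W s \<omega>) / real s ^ s) \<le> (\<Sum>\<omega>\<in>\<Omega>. Qp s \<omega>)"
    and "(\<Sum>\<omega>\<in>\<Omega>. Qp s \<omega>) \<le> (\<Sum>n\<in>Nset \<alpha> i. (\<Sum>\<omega>\<in>Sn s n. W s \<omega>) / real s ^ s
            + (\<Sum>\<omega>\<in>{\<omega>\<in>Om s n. card \<omega> < s}. W s \<omega>))"
proof -
  let ?N = "Nset \<alpha> i"
  let ?A = "{\<omega>\<in>\<Omega>. card \<omega> = s}"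
  let ?B = "{\<omega>\<in>\<Omega>. card \<omega> < s}"
  have finN: "finite ?N" using Nset_card(1)[OF a i] .
  have fin\<Omega>: "finite \<Omega>" unfolding \<Omega>_def by (rule Omega_finite[OF a i])
  have \<Omega>: "\<Omega> = (\<Union>n\<in>?N. Om s n)" unfolding \<Omega>_def by (rule Omega_eq)
  have cardle: "card \<omega> \<le> s" if "\<omega> \<in> \<Omega>" for \<omega> using that Om_props(1) unfolding \<Omega> by blast
  have AB: "\<Omega> = ?A \<union> ?B" using cardle by force
  have split: "(\<Sum>\<omega>\<in>\<Omega>. Qp s \<omega>) = (\<Sum>\<omega>\<in>?A. Qp s \<omega>) + (\<Sum>\<omega>\<in>?B. Qp s \<omega>)"
    by (subst AB, rule sum.union_disjoint) (use fin\<Omega> in auto)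
  have A: "?A = (\<Union>n\<in>?N. Sn s n)"
  proof (intro equalityI subsetI)
    fix \<omega> assume "\<omega> \<in> ?A"
    then obtain n where "n \<in> ?N" "\<omega> \<in> Om s n" "card \<omega> = s" unfolding \<Omega> by blast
    then show "\<omega> \<in> (\<Union>n\<in>?N. Sn s n)" using Om_card_s by blast
  next
    fix \<omega> assume "\<omega> \<in> (\<Union>n\<in>?N. Sn s n)"
    then obtain n where "n \<in> ?N" "\<omega> \<in> Sn s n" by blast
    then show "\<omega> \<in> ?A" unfolding \<Omega> using Sn_Om by (auto simp: Sn_def)
  qed
  have SA: "(\<Sum>\<omega>\<in>?A. Qp s \<omega>) = (\<Sum>n\<in>?N. (\<Sum>\<omega>\<in>Sn s n. W s \<omega>) / real s ^ s)"
  proof -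
    have "(\<Sum>\<omega>\<in>?A. Qp s \<omega>) = (\<Sum>n\<in>?N. \<Sum>\<omega>\<in>Sn s n. Qp s \<omega>)"
      unfolding A
    proof (rule sum.UNION_disjoint)
      show "finite ?N" by (rule finN)
      show "\<forall>n\<in>?N. finite (Sn s n)" by (simp add: Sn_finite)
      show "\<forall>n\<in>?N. \<forall>m\<in>?N. n \<noteq> m \<longrightarrow> Sn s n \<inter> Sn s m = {}" by (auto simp: Sn_def)
    qed
    also have "\<dots> = (\<Sum>n\<in>?N. \<Sum>\<omega>\<in>Sn s n. W s \<omega> / real s ^ s)"
      by (intro sum.cong refl) (auto simp: Sn_def Qp_W)
    also have "\<dots> = (\<Sum>n\<in>?N. (\<Sum>\<omega>\<in>Sn s n. W s \<omega>) / real s ^ s)"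
      by (simp add: sum_divide_distrib)
    finally show ?thesis .
  qed
  have B0: "0 \<le> (\<Sum>\<omega>\<in>?B. Qp s \<omega>)" unfolding Qp_def
    by (intro sum_nonneg prod_nonneg) (simp add: incl_prob_bounds(1))
  have B1: "(\<Sum>\<omega>\<in>?B. Qp s \<omega>) \<le> (\<Sum>n\<in>?N. \<Sum>\<omega>\<in>{\<omega>\<in>Om s n. card \<omega> < s}. W s \<omega>)"
  proof -
    let ?S = "SIGMA n:?N. {\<omega>\<in>Om s n. card \<omega> < s}"
    have finS: "finite ?S" using finN Om_finite by (intro finite_SigmaI) auto
    have "(\<Sum>\<omega>\<in>?B. Qp s \<omega>) \<le> (\<Sum>\<omega>\<in>?B. W s \<omega>)"
    proof (rule sum_mono)
      fix \<omega> assume "\<omega> \<in> ?B"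
      then obtain n where "\<omega> \<in> Om s n" unfolding \<Omega> by blast
      then have "\<omega> \<subseteq> {1..}" "finite \<omega>" by (auto simp: Om_def)
      then show "Qp s \<omega> \<le> W s \<omega>" using s by (intro Qp_le_W) auto
    qed
    also have "\<dots> \<le> (\<Sum>\<omega>\<in>snd ` ?S. W s \<omega>)"
    proof (rule sum_mono2)
      show "finite (snd ` ?S)" using finS by simp
      show "?B \<subseteq> snd ` ?S"
      proof
        fix \<omega> assume "\<omega> \<in> ?B"
        then obtain n where "n \<in> ?N" "\<omega> \<in> Om s n" "card \<omega> < s" unfolding \<Omega> by blast
        then show "\<omega> \<in> snd ` ?S" by (intro image_eqI[of _ _ "(n, \<omega>)"]) auto
      qed
      show "\<And>b. b \<in> snd ` ?S - ?B \<Longrightarrow> 0 \<le> W s b" by (simp add: W_nonneg)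
    qed
    also have "\<dots> \<le> (\<Sum>p\<in>?S. W s (snd p))"
      using sum_image_le[OF finS, of "W s" snd] by (simp add: W_nonneg o_def)
    also have "\<dots> = (\<Sum>n\<in>?N. \<Sum>\<omega>\<in>{\<omega>\<in>Om s n. card \<omega> < s}. W s \<omega>)"
      using finN Om_finite by (subst sum.Sigma) (auto simp: case_prod_unfold)
    finally show ?thesis .
  qed
  show "(\<Sum>n\<in>?N. (\<Sum>\<omega>\<in>Sn s n. W s \<omega>) / real s ^ s) \<le> (\<Sum>\<omega>\<in>\<Omega>. Qp s \<omega>)"
    using split SA B0 by linarith
  show "(\<Sum>\<omega>\<in>\<Omega>. Qp s \<omega>) \<le> (\<Sum>n\<in>?N. (\<Sum>\<omega>\<in>Sn s n. W s \<omega>) / real s ^ s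
            + (\<Sum>\<omega>\<in>{\<omega>\<in>Om s n. card \<omega> < s}. W s \<omega>))"
    using split SA B1 by (simp add: sum.distrib)
qed

lemma T_lim:
  assumes s: "2 \<le> s" and a: "0 < \<alpha>"
  shows "(\<lambda>i. (\<Sum>\<omega>\<in>Omega_set s {real i .. real i + \<alpha> * ln (real i)}. Qp s \<omega>) / ln (real i)) \<longlonglongrightarrow> \<alpha> * lambda_s s"
proof -
  define G where "G n = (\<Sum>\<omega>\<in>Sn s n. W s \<omega>)" for n
  define E where "E n = (\<Sum>\<omega>\<in>{\<omega>\<in>Om s n. card \<omega> < s}. W s \<omega>)" for n
  have lam: "lambda_s s = Gamma (1 / real s) ^ s / fact s / real s ^ s"
    by (simp add: lambda_s_def)
  have h1: "(\<lambda>n. G n / real s ^ s) \<longlonglongrightarrow> lambda_s s"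
    unfolding lam G_def by (intro tendsto_divide G_lim s tendsto_const) (use s in auto)
  have h2: "(\<lambda>n. G n / real s ^ s + E n) \<longlonglongrightarrow> lambda_s s + 0"
    unfolding E_def by (intro tendsto_add h1 Eprime_lim s)
  have l1: "(\<lambda>i. (\<Sum>n\<in>Nset \<alpha> i. G n / real s ^ s) / ln (real i)) \<longlonglongrightarrow> \<alpha> * lambda_s s"
    by (rule sum_over_ln[OF a h1])
  have l2: "(\<lambda>i. (\<Sum>n\<in>Nset \<alpha> i. G n / real s ^ s + E n) / ln (real i)) \<longlonglongrightarrow> \<alpha> * lambda_s s"
    using sum_over_ln[OF a h2] by simp
  show ?thesis
  proof (rule tendsto_sandwich[OF _ _ l1 l2])
    show "eventually (\<lambda>i. (\<Sum>n\<in>Nset \<alpha> i. G n / real s ^ s) / ln (real i)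
        \<le> (\<Sum>\<omega>\<in>Omega_set s {real i .. real i + \<alpha> * ln (real i)}. Qp s \<omega>) / ln (real i)) sequentially"
      using eventually_ge_at_top[of 1]
    proof eventually_elim
      case (elim i)
      show ?case using T_bounds(1)[OF s a elim] unfolding G_def
        by (intro divide_right_mono) (use elim in auto)
    qed
    show "eventually (\<lambda>i. (\<Sum>\<omega>\<in>Omega_set s {real i .. real i + \<alpha> * ln (real i)}. Qp s \<omega>) / ln (real i)
        \<le> (\<Sum>n\<in>Nset \<alpha> i. G n / real s ^ s + E n) / ln (real i)) sequentially"
      using eventually_ge_at_top[of 1]
    proof eventually_elim
      case (elim i)
      show ?case using T_bounds(2)[OF s a elim] unfolding G_def E_def
        by (intro divide_right_mono) (use elim in auto)
    qed
  qed
qed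

lemma Qp_small:
  assumes s: "1 \<le> s" and om: "\<omega> \<in> Om s n" and i: "1 \<le> i" "i \<le> n"
  shows "Qp s \<omega> \<le> (1 / real s) * (real i / real s) powr (-1 + 1 / real s)"
    and "0 \<le> Qp s \<omega>" "Qp s \<omega> \<le> 1 / real s"
proof -
  from om obtain a where fin: "finite \<omega>" and pos: "\<omega> \<subseteq> {1..}" and a: "\<forall>x\<in>\<omega>. a x \<ge> 1"
    "(\<Sum>x\<in>\<omega>. a x) = s" "(\<Sum>x\<in>\<omega>. a x * x) = n"
    by (auto simp: Om_def sigma_set_iff)
  have ne: "\<omega> \<noteq> {}" using a(2) s by auto
  define m where "m = Max \<omega>"
  have m: "m \<in> \<omega>" using fin ne by (simp add: m_def)
  have "n \<le> (\<Sum>x\<in>\<omega>. a x * m)" unfolding a(3)[symmetric] using fin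
    by (intro sum_mono mult_left_mono) (auto simp: m_def)
  also have "\<dots> = s * m" by (metis a(2) sum_distrib_right)
  finally have nm: "n \<le> s * m" .
  have m1: "1 \<le> m" using m pos by auto
  have ms: "real i / real s \<le> real m"
  proof -
    have "real i \<le> real s * real m" using nm i by (metis of_nat_le_iff of_nat_mult order.trans)
    then show ?thesis using s by (simp add: divide_le_eq mult.commute)
  qed
  have Q: "Qp s \<omega> \<le> incl_prob s m"
  proof -
    have "Qp s \<omega> = incl_prob s m * (\<Prod>x\<in>\<omega> - {m}. incl_prob s x)"
      unfolding Qp_def using fin m by (simp add: prod.remove)
    also have "\<dots> \<le> incl_prob s m * 1"
      by (intro mult_left_mono prod_le_1) (auto simp: incl_prob_bounds(1) incl_prob_le1)
    finally show ?thesis by simp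
  qed
  show "0 \<le> Qp s \<omega>" unfolding Qp_def by (intro prod_nonneg) (simp add: incl_prob_bounds(1))
  show "Qp s \<omega> \<le> 1 / real s" using Q incl_prob_bounds(2)[of s m] by linarith
  have e: "-1 + 1 / real s \<le> 0" using s by simp
  have "real m powr (-1 + 1 / real s) \<le> (real i / real s) powr (-1 + 1 / real s)"
    using e ms i s by (intro powr_mono2') auto
  then have "incl_prob s m \<le> (1 / real s) * (real i / real s) powr (-1 + 1 / real s)"
    unfolding incl_prob_def by (intro mult_left_mono) auto
  then show "Qp s \<omega> \<le> (1 / real s) * (real i / real s) powr (-1 + 1 / real s)" using Q by linarith
qed

lemma q_lim:
  assumes s: "2 \<le> s"
  shows "(\<lambda>i. (1 / real s) * (real i / real s) powr (-1 + 1 / real s)) \<longlonglongrightarrow> 0"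
proof -
  have e: "-1 + 1 / real s < 0" using s by simp
  have f0: "filterlim (\<lambda>i. (1 / real s) * real i) at_top sequentially"
    by (rule filterlim_tendsto_pos_mult_at_top[OF tendsto_const _ filterlim_real_sequentially]) (use s in simp)
  have eq: "(\<lambda>i. (1 / real s) * real i) = (\<lambda>i. real i / real s)" by auto
  have f: "filterlim (\<lambda>i. real i / real s) at_top sequentially" using f0 unfolding eq .
  have "(\<lambda>i. (1 / real s) * (real i / real s) powr (-1 + 1 / real s)) \<longlonglongrightarrow> (1 / real s) * 0"
    by (intro tendsto_mult tendsto_const tendsto_neg_powr[OF e f])
  then show ?thesis by simp
qed

lemma log_bounds:
  assumes "0 \<le> q" "q < (1::real)"
  shows "q \<le> - ln (1 - q)" "- ln (1 - q) \<le> q / (1 - q)"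
proof -
  show "q \<le> - ln (1 - q)" using ln_le_minus_one[of "1 - q"] assms by simp
  have "ln (1 / (1 - q)) \<le> 1 / (1 - q) - 1" using assms by (intro ln_le_minus_one) auto
  moreover have "ln (1 / (1 - q)) = - ln (1 - q)" using assms by (simp add: ln_div)
  moreover have "1 / (1 - q) - 1 = q / (1 - q)" using assms by (simp add: field_simps)
  ultimately show "- ln (1 - q) \<le> q / (1 - q)" by simp
qed

theorem lemma5:
  fixes s :: nat and \<alpha> :: real
  assumes "s \<ge> 2" and "\<alpha> > 0"
  shows "\<exists>e :: nat \<Rightarrow> real. e \<longlonglongrightarrow> 0 \<and>
    (\<forall>i\<ge>2. (\<Prod>\<omega>\<in>Omega_set s {real i .. real i + \<alpha> * ln (real i)}. prob_Ec s \<omega>)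
              = real i powr (- \<alpha> * lambda_s s + e i))"
proof -
  note s = assms(1) and a = assms(2)
  define \<Omega> where "\<Omega> i = Omega_set s {real i .. real i + \<alpha> * ln (real i)}" for i
  define Lg where "Lg i = (\<Sum>\<omega>\<in>\<Omega> i. - ln (1 - Qp s \<omega>))" for i
  define T where "T i = (\<Sum>\<omega>\<in>\<Omega> i. Qp s \<omega>)" for i
  define q where "q i = (1 / real s) * (real i / real s) powr (-1 + 1 / real s)" for i
  have fin: "finite (\<Omega> i)" if "1 \<le> i" for i unfolding \<Omega>_def by (rule Omega_finite[OF a that])
  have mem: "0 \<le> Qp s \<omega> \<and> Qp s \<omega> \<le> q i \<and> Qp s \<omega> < 1" if "\<omega> \<in> \<Omega> i" "1 \<le> i" for \<omega> i
  proof -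
    from that(1) obtain n where n: "n \<in> Nset \<alpha> i" "\<omega> \<in> Om s n" unfolding \<Omega>_def Omega_eq by blast
    have iN: "i \<le> n" using n(1) by (rule Nset_ge)
    have s1: "1 \<le> s" using s by simp
    note Q = Qp_small[OF s1 n(2) that(2) iN]
    have "1 / real s < 1" using s by simp
    then show ?thesis using Q unfolding q_def by linarith
  qed
  have Tl: "(\<lambda>i. T i / ln (real i)) \<longlonglongrightarrow> \<alpha> * lambda_s s"
    unfolding T_def \<Omega>_def by (rule T_lim[OF s a])
  have ql: "q \<longlonglongrightarrow> 0" unfolding q_def by (rule q_lim[OF s])
  have Lgl: "(\<lambda>i. Lg i / ln (real i)) \<longlonglongrightarrow> \<alpha> * lambda_s s"
  proof (rule tendsto_sandwich[OF _ _ Tl])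
    show "eventually (\<lambda>i. T i / ln (real i) \<le> Lg i / ln (real i)) sequentially"
      using eventually_ge_at_top[of 2]
    proof eventually_elim
      case (elim i)
      have "T i \<le> Lg i" unfolding T_def Lg_def
        using mem elim by (intro sum_mono log_bounds(1)) auto
      then show ?case by (intro divide_right_mono) (use elim in auto)
    qed
    have "eventually (\<lambda>i. q i < 1/2) sequentially" using ql by (rule order_tendstoD) simp
    then show "eventually (\<lambda>i. Lg i / ln (real i) \<le> T i / ln (real i) / (1 - q i)) sequentially"
      using eventually_ge_at_top[of 2]
    proof eventually_elim
      case (elim i)
      have "Lg i \<le> (\<Sum>\<omega>\<in>\<Omega> i. Qp s \<omega> / (1 - q i))" unfolding Lg_def
      proof (rule sum_mono)
        fix \<omega> assume "\<omega> \<in> \<Omega> i"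
        then have m: "0 \<le> Qp s \<omega>" "Qp s \<omega> \<le> q i" "Qp s \<omega> < 1" using mem elim by auto
        have "- ln (1 - Qp s \<omega>) \<le> Qp s \<omega> / (1 - Qp s \<omega>)" using m by (intro log_bounds(2))
        also have "\<dots> \<le> Qp s \<omega> / (1 - q i)" using m elim by (intro divide_left_mono) auto
        finally show "- ln (1 - Qp s \<omega>) \<le> Qp s \<omega> / (1 - q i)" .
      qed
      also have "\<dots> = T i / (1 - q i)" unfolding T_def by (simp add: sum_divide_distrib)
      finally have "Lg i / ln (real i) \<le> T i / (1 - q i) / ln (real i)"
        by (intro divide_right_mono) (use elim in auto)
      then show ?case by (simp add: mult.commute)
    qed
    have "(\<lambda>i. T i / ln (real i) / (1 - q i)) \<longlonglongrightarrow> \<alpha> * lambda_s s / (1 - 0)"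
      by (intro tendsto_divide Tl tendsto_diff tendsto_const ql) simp
    then show "(\<lambda>i. T i / ln (real i) / (1 - q i)) \<longlonglongrightarrow> \<alpha> * lambda_s s" by simp
  qed
  define e where "e i = \<alpha> * lambda_s s - Lg i / ln (real i)" for i
  show ?thesis
  proof (intro exI conjI allI impI)
    have "e \<longlonglongrightarrow> \<alpha> * lambda_s s - \<alpha> * lambda_s s"
      unfolding e_def by (intro tendsto_diff tendsto_const Lgl)
    then show "e \<longlonglongrightarrow> 0" by simp
  next
    fix i :: nat assume i: "2 \<le> i"
    then have i1: "1 \<le> i" by simp
    have "(\<Prod>\<omega>\<in>\<Omega> i. prob_Ec s \<omega>) = (\<Prod>\<omega>\<in>\<Omega> i. exp (ln (1 - Qp s \<omega>)))"
    proof (rule prod.cong[OF refl])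
      fix \<omega> assume w: "\<omega> \<in> \<Omega> i"
      then have "finite \<omega>" unfolding \<Omega>_def Omega_set_def by auto
      then have "prob_Ec s \<omega> = 1 - Qp s \<omega>" by (simp add: prob_Ec_eq Qp_def)
      moreover have "Qp s \<omega> < 1" using mem[OF w i1] by simp
      ultimately show "prob_Ec s \<omega> = exp (ln (1 - Qp s \<omega>))" by simp
    qed
    also have "\<dots> = exp (- Lg i)" unfolding Lg_def by (simp add: exp_sum[OF fin[OF i1]] sum_negf)
    also have "\<dots> = real i powr (- \<alpha> * lambda_s s + e i)"
    proof -
      have l: "ln (real i) > 0" using i by simp
      have "- \<alpha> * lambda_s s + e i = - Lg i / ln (real i)" by (simp add: e_def)
      then show ?thesis using l i by (simp add: powr_def)
    qed
    finally show "(\<Prod>\<omega>\<in>Omega_set s {real i .. real i + \<alpha> * ln (real i)}. prob_Ec s \<omega>)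
              = real i powr (- \<alpha> * lambda_s s + e i)" unfolding \<Omega>_def .
  qed
qed

end
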